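(* Let $\mathbb{K}\subseteq\mathcal{K}\subseteq\mathcal{A}$ be field extensions such that $\mathcal{K}\subseteq\mathcal{A}$ is finite, separable and normal with Galois group $G$. Assume $G=NH$, where $H$ and $N$ are subgroups with $N\cap H=\{1\}$ and $N$ is generated by an element $\sigma$ central in $G$. Set $\mathcal{B}=\mathcal{A}^H$. Then $\mathcal{B}[X,\sigma,0]\subseteq\mathcal{A}[X,\sigma,0]$ is a centrally $(\mathbb{K}H)^*$-Galois extension.
   Context: $(\mathbb{K}H)^*$ is the dual Hopf algebra of the group algebra $\mathbb{K}H$, with $\{p_x\}_{x\in H}$ the dual basis; $\mathcal{A}$ is a $(\mathbb{K}H)^*$-comodule algebra via $\rho(a)=\sum_{x\in H}x(a)\otimes p_x$, with coinvariants $\mathcal{A}^H=\mathcal{B}$. The Ore extension $\mathcal{A}[X,\sigma,0]$ is the free left $\mathcal{A}$-module on $1,X,X^2,\dots$ with $X^nX^m=X^{n+m}$ and $Xa=\sigma(a)X$; $\mathcal{B}[X,\sigma,0]$ is its subalgebra (as $\sigma$ commutes with $H$). It is a comodule algebra via $\rho(aX^n)=\sum_x x(a)X^n\otimes p_x$, with coinvariants $\mathcal{B}[X,\sigma,0]$. For a comodule algebra $\mathcal{C}$ over a commutative Hopf algebra $\mathcal{H}$, an extension of coinvariants $\mathcal{C}'\subseteq\mathcal{C}$ is $\mathcal{H}$-Galois if $\mathcal{C}\otimes_{\mathcal{C}'}\mathcal{C}\to\mathcal{C}\otimes\mathcal{H}$, $c\otimes x\mapsto\sum cx_{\langle0\rangle}\otimes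 x_{\langle1\rangle}$, is bijective; $\mathcal{C}'\subseteq\mathcal{C}$ is centrally $\mathcal{H}$-Galois if the center $Z(\mathcal{C})$ is a subcomodule and $Z(\mathcal{C})^{\mathrm{co}\mathcal{H}}\subseteq Z(\mathcal{C})$ is $\mathcal{H}$-Galois with $Z(\mathcal{C})$ faithfully flat over $Z(\mathcal{C})^{\mathrm{co}\mathcal{H}}$. *)

theory Defs
  imports "HOL-Computational_Algebra.Polynomial" "HOL-Library.Poly_Mapping"
begin

section \<open>Field-theoretic notions (inside an ambient field type 'a, which plays the role of A)\<close>

definition subfield :: "'a::field set \<Rightarrow> bool" where
  "subfield S \<longleftrightarrow> 0 \<in> S \<and> 1 \<in> S \<and> (\<forall>x\<in>S. \<forall>y\<in>S. x + y \<in> S \<and> x * y \<in> S)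
      \<and> (\<forall>x\<in>S. - x \<in> S \<and> inverse x \<in> S)"

definition finite_ext :: "'a::field set \<Rightarrow> bool" where
  "finite_ext Kc \<longleftrightarrow> (\<exists>Bs. finite Bs \<and>
      (\<forall>a. \<exists>c. (\<forall>b\<in>Bs. c b \<in> Kc) \<and> a = (\<Sum>b\<in>Bs. c b * b)))"

definition poly_over :: "'a::field set \<Rightarrow> 'a poly \<Rightarrow> bool" where
  "poly_over Kc p \<longleftrightarrow> (\<forall>n. coeff p n \<in> Kc)"

definition is_minpoly :: "'a::field set \<Rightarrow> 'a \<Rightarrow> 'a poly \<Rightarrow> bool" where
  "is_minpoly Kc a p \<longleftrightarrow> lead_coeff p = 1 \<and> poly_over Kc p \<and> poly p a = 0 \<and>
      (\<forall>q. q \<noteq> 0 \<and> poly_over Kc q \<and> poly q a = 0 \<longrightarrow> degree p \<le> degree q)"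

definition separable_ext :: "'a::field set \<Rightarrow> bool" where
  "separable_ext Kc \<longleftrightarrow> (\<forall>a p. is_minpoly Kc a p \<longrightarrow> coprime p (pderiv p))"

definition normal_ext :: "'a::field set \<Rightarrow> bool" where
  "normal_ext Kc \<longleftrightarrow> (\<forall>a p. is_minpoly Kc a p \<longrightarrow> (\<exists>rs. p = (\<Prod>r\<leftarrow>rs. [:- r, 1:])))"

definition field_aut :: "('a::field \<Rightarrow> 'a) \<Rightarrow> bool" where
  "field_aut g \<longleftrightarrow> bij g \<and> (\<forall>x y. g (x + y) = g x + g y) \<and> (\<forall>x y. g (x * y) = g x * g y)"

definition galois_group :: "'a::field set \<Rightarrow> ('a \<Rightarrow> 'a) set" where
  "galois_group Kc = {g. field_aut g \<and> (\<forall>k\<in>Kc. g k = k)}"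

definition subgrp :: "('a \<Rightarrow> 'a) set \<Rightarrow> ('a \<Rightarrow> 'a) set \<Rightarrow> bool" where
  "subgrp H G \<longleftrightarrow> H \<subseteq> G \<and> id \<in> H \<and> (\<forall>g\<in>H. \<forall>h\<in>H. g \<circ> h \<in> H) \<and> (\<forall>h\<in>H. inv h \<in> H)"

definition cyclic_gen :: "('a \<Rightarrow> 'a) \<Rightarrow> ('a \<Rightarrow> 'a) set" where
  "cyclic_gen s = range (\<lambda>n. s ^^ n) \<union> range (\<lambda>n. inv s ^^ n)"

definition fixed_field :: "('a \<Rightarrow> 'a) set \<Rightarrow> 'a set" where
  "fixed_field H = {a. \<forall>h\<in>H. h a = a}"

text \<open>Elements are represented by 'a poly (coefficients on the left: sum a_i X^i);
  multiplication is twisted: (a X^i)(b X^j) = a s^i(b) X^(i+j).\<close>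
definition ore_mult :: "('a::comm_ring_1 \<Rightarrow> 'a) \<Rightarrow> 'a poly \<Rightarrow> 'a poly \<Rightarrow> 'a poly" where
  "ore_mult s p q = (\<Sum>i\<le>degree p. \<Sum>j\<le>degree q. monom (coeff p i * (s ^^ i) (coeff q j)) (i + j))"

definition ore_sub :: "'a::zero set \<Rightarrow> 'a poly set" where
  "ore_sub B = {p. \<forall>n. coeff p n \<in> B}"

text \<open>Action of H on A[X,s,0] coefficientwise: the (K H)^*-coaction
  rho(a X^n) = sum_x x(a) X^n \<otimes> p_x, written as the family of maps (x acting).\<close>
definition ore_act :: "('a::zero \<Rightarrow> 'a) \<Rightarrow> 'a poly \<Rightarrow> 'a poly" where
  "ore_act h p = map_poly h p"

text \<open>Relations defining L \<otimes>_R M as a quotient of the free abelian group on L \<times> M.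
  ract: right action of R on the left factor; mul: multiplication (left action on right factor).\<close>
inductive_set tensor_rel :: "'l::ab_group_add set \<Rightarrow> ('l \<Rightarrow> 'c \<Rightarrow> 'l) \<Rightarrow> 'c::ab_group_add set
    \<Rightarrow> 'c set \<Rightarrow> ('c \<Rightarrow> 'c \<Rightarrow> 'c) \<Rightarrow> ('l \<times> 'c \<Rightarrow>\<^sub>0 int) set"
  for Lc ract Mc R mul where
  zero: "0 \<in> tensor_rel Lc ract Mc R mul"
| addl: "m \<in> Lc \<Longrightarrow> m' \<in> Lc \<Longrightarrow> z \<in> Mc \<Longrightarrow>
     Poly_Mapping.single (m + m', z) 1 - Poly_Mapping.single (m, z) 1 - Poly_Mapping.single (m', z) 1
       \<in> tensor_rel Lc ract Mc R mul"
| addr: "m \<in> Lc \<Longrightarrow> z \<in> Mc \<Longrightarrow> z' \<in> Mc \<Longrightarrow>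
     Poly_Mapping.single (m, z + z') 1 - Poly_Mapping.single (m, z) 1 - Poly_Mapping.single (m, z') 1
       \<in> tensor_rel Lc ract Mc R mul"
| bal: "m \<in> Lc \<Longrightarrow> r \<in> R \<Longrightarrow> z \<in> Mc \<Longrightarrow>
     Poly_Mapping.single (ract m r, z) 1 - Poly_Mapping.single (m, mul r z) 1
       \<in> tensor_rel Lc ract Mc R mul"
| plus: "s \<in> tensor_rel Lc ract Mc R mul \<Longrightarrow> t \<in> tensor_rel Lc ract Mc R mul \<Longrightarrow>
     s + t \<in> tensor_rel Lc ract Mc R mul"
| uminus: "s \<in> tensor_rel Lc ract Mc R mul \<Longrightarrow> - s \<in> tensor_rel Lc ract Mc R mul"

text \<open>R-module structure on a whole type 'm (R commutative, so left = right modules).\<close>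
definition rmodule :: "'c::ring_1 set \<Rightarrow> ('c \<Rightarrow> 'c \<Rightarrow> 'c) \<Rightarrow> ('c \<Rightarrow> 'm::ab_group_add \<Rightarrow> 'm) \<Rightarrow> bool" where
  "rmodule R mul sm \<longleftrightarrow>
     (\<forall>r\<in>R. \<forall>m n. sm r (m + n) = sm r m + sm r n) \<and>
     (\<forall>r\<in>R. \<forall>s\<in>R. \<forall>m. sm (r + s) m = sm r m + sm s m) \<and>
     (\<forall>r\<in>R. \<forall>s\<in>R. \<forall>m. sm (mul r s) m = sm r (sm s m)) \<and>
     (\<forall>m. sm 1 m = m)"

definition rlinear :: "'c set \<Rightarrow> ('c \<Rightarrow> 'm::ab_group_add \<Rightarrow> 'm) \<Rightarrow> ('c \<Rightarrow> 'n::ab_group_add \<Rightarrow> 'n)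
    \<Rightarrow> ('m \<Rightarrow> 'n) \<Rightarrow> bool" where
  "rlinear R sm sn f \<longleftrightarrow> (\<forall>m m'. f (m + m') = f m + f m') \<and> (\<forall>r\<in>R. \<forall>m. f (sm r m) = sn r (f m))"

text \<open>f \<otimes> id on formal sums.\<close>
definition tmap :: "('m \<Rightarrow> 'n) \<Rightarrow> ('m \<times> 'c \<Rightarrow>\<^sub>0 int) \<Rightarrow> ('n \<times> 'c \<Rightarrow>\<^sub>0 int)" where
  "tmap f s = (\<Sum>p\<in>Poly_Mapping.keys s. Poly_Mapping.single (f (fst p), snd p) (Poly_Mapping.lookup s p))"

text \<open>Z is flat over R (R \<subseteq> Z, both with multiplication mul): - \<otimes>_R Z preserves injections.\<close>
definition flat_over :: "'c::ring_1 set \<Rightarrow> 'c set \<Rightarrow> ('c \<Rightarrow> 'c \<Rightarrow> 'c)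
    \<Rightarrow> 'm::ab_group_add itself \<Rightarrow> 'n::ab_group_add itself \<Rightarrow> bool" where
  "flat_over R Z mul TM TN \<longleftrightarrow>
     (\<forall>(sm :: 'c \<Rightarrow> 'm \<Rightarrow> 'm) (sn :: 'c \<Rightarrow> 'n \<Rightarrow> 'n) f.
        rmodule R mul sm \<and> rmodule R mul sn \<and> rlinear R sm sn f \<and> inj f \<longrightarrow>
        (\<forall>s. Poly_Mapping.keys s \<subseteq> UNIV \<times> Z \<and> tmap f s \<in> tensor_rel UNIV (\<lambda>n r. sn r n) Z R mul
              \<longrightarrow> s \<in> tensor_rel UNIV (\<lambda>m r. sm r m) Z R mul))"

text \<open>Faithfully flat: flat, and M \<otimes>_R Z = 0 implies M = 0.\<close>
definition faithfully_flat_over :: "'c::ring_1 set \<Rightarrow> 'c set \<Rightarrow> ('c \<Rightarrow> 'c \<Rightarrow> 'c)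
    \<Rightarrow> 'm::ab_group_add itself \<Rightarrow> 'n::ab_group_add itself \<Rightarrow> bool" where
  "faithfully_flat_over R Z mul TM TN \<longleftrightarrow> flat_over R Z mul TM TN \<and>
     (\<forall>sm :: 'c \<Rightarrow> 'm \<Rightarrow> 'm. rmodule R mul sm \<and>
        (\<forall>m z. z \<in> Z \<longrightarrow> Poly_Mapping.single (m, z) 1 \<in> tensor_rel UNIV (\<lambda>m r. sm r m) Z R mul)
        \<longrightarrow> (\<forall>m::'m. m = 0))"

text \<open>A (K H)^*-coaction rho(c) = sum_x x(c) \<otimes> p_x is encoded by the action act of H.
  C \<otimes> (K H)^* is identified with functions H \<rightarrow> C (sum_x c_x \<otimes> p_x \<mapsto> (x \<mapsto> c_x)).\<close>

definition coinv :: "'c set \<Rightarrow> ('h \<Rightarrow> 'c \<Rightarrow> 'c) \<Rightarrow> 'h set \<Rightarrow> 'c set" where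
  "coinv C act H = {c \<in> C. \<forall>h\<in>H. act h c = c}"

definition ring_center :: "'c set \<Rightarrow> ('c \<Rightarrow> 'c \<Rightarrow> 'c) \<Rightarrow> 'c set" where
  "ring_center C mul = {z \<in> C. \<forall>c\<in>C. mul z c = mul c z}"

definition subcomodule :: "'c set \<Rightarrow> ('h \<Rightarrow> 'c \<Rightarrow> 'c) \<Rightarrow> 'h set \<Rightarrow> bool" where
  "subcomodule S act H \<longleftrightarrow> (\<forall>z\<in>S. \<forall>h\<in>H. act h z \<in> S)"

text \<open>Canonical map C \<otimes>_{C'} C \<rightarrow> C \<otimes> (K H)^*, c \<otimes> x \<mapsto> sum_h c h(x) \<otimes> p_h, on formal sums.\<close>
definition galois_map :: "('c::ring_1 \<Rightarrow> 'c \<Rightarrow> 'c) \<Rightarrow> ('h \<Rightarrow> 'c \<Rightarrow> 'c)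
    \<Rightarrow> ('c \<times> 'c \<Rightarrow>\<^sub>0 int) \<Rightarrow> 'h \<Rightarrow> 'c" where
  "galois_map mul act s h = (\<Sum>p\<in>Poly_Mapping.keys s. of_int (Poly_Mapping.lookup s p) * mul (fst p) (act h (snd p)))"

definition hopf_galois :: "'c::ring_1 set \<Rightarrow> 'c set \<Rightarrow> ('c \<Rightarrow> 'c \<Rightarrow> 'c) \<Rightarrow> ('h \<Rightarrow> 'c \<Rightarrow> 'c)
    \<Rightarrow> 'h set \<Rightarrow> bool" where
  "hopf_galois C' C mul act H \<longleftrightarrow> C' = coinv C act H \<and>
     (\<forall>f. (\<forall>h\<in>H. f h \<in> C) \<longrightarrow>
        (\<exists>s. Poly_Mapping.keys s \<subseteq> C \<times> C \<and> (\<forall>h\<in>H. galois_map mul act s h = f h))) \<and>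
     (\<forall>s. Poly_Mapping.keys s \<subseteq> C \<times> C \<and> (\<forall>h\<in>H. galois_map mul act s h = 0) \<longrightarrow>
        s \<in> tensor_rel C (\<lambda>c r. mul c r) C C' mul)"

definition centrally_galois :: "'c::ring_1 set \<Rightarrow> 'c set \<Rightarrow> ('c \<Rightarrow> 'c \<Rightarrow> 'c) \<Rightarrow> ('h \<Rightarrow> 'c \<Rightarrow> 'c)
    \<Rightarrow> 'h set \<Rightarrow> 'm::ab_group_add itself \<Rightarrow> 'n::ab_group_add itself \<Rightarrow> bool" where
  "centrally_galois C' C mul act H TM TN \<longleftrightarrow>
     C' = coinv C act H \<and>
     subcomodule (ring_center C mul) act H \<and>
     hopf_galois (coinv (ring_center C mul) act H) (ring_center C mul) mul act H \<and>
     faithfully_flat_over (coinv (ring_center C mul) act H) (ring_center C mul) mul TM TN"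

end

theory Submission
  imports Defs "HOL-Library.Function_Algebras"
begin

lemma fa_basic:
  assumes "field_aut g"
  shows "g 0 = 0" "g 1 = 1" "g (x + y) = g x + g y" "g (x*y) = g x * g y"
    "g (-x) = - g x" "g (x - y) = g x - g y" "inj g" "surj g" "g (inverse x) = inverse (g x)"
proof -
  have add: "\<And>x y. g (x + y) = g x + g y" and mul: "\<And>x y. g (x * y) = g x * g y" and b: "bij g"
    using assms by (auto simp: field_aut_def)
  have "g 0 + 0 = g 0 + g 0" using add[of 0 0] by simp
  then show g0: "g 0 = 0" by (metis add_left_imp_eq)
  show "g (x + y) = g x + g y" "g (x*y) = g x * g y" by (rule add, rule mul)
  show "inj g" "surj g" using b by (auto simp: bij_def)
  then obtain u where u: "g u = 1" by (metis surjD)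
  have "g u = g 1 * g u" using mul[of 1 u] by simp
  then show g1: "g 1 = 1" using u by simp
  have gm: "g (-v) = - g v" for v
  proof -
    have "g v + g (-v) = 0" using add[of v "-v"] g0 by simp
    then show ?thesis by (simp add: eq_neg_iff_add_eq_0 add.commute)
  qed
  show "g (-x) = - g x" by (rule gm)
  show "g (x - y) = g x - g y" using add[of x "-y"] gm[of y] by simp
  show "g (inverse x) = inverse (g x)"
  proof (cases "x = 0")
    case True then show ?thesis using g0 by simp
  next
    case False
    have "g x * g (inverse x) = 1" using mul[of x "inverse x"] False g1 by simp
    then show ?thesis by (metis inverse_unique)
  qed
qed

lemma dedekind:
  fixes S :: "('a::field \<Rightarrow> 'a) set"
  assumes "finite S" "\<forall>\<chi>\<in>S. \<forall>x y. \<chi> (x*y) = \<chi> x * \<chi> y" "\<forall>\<chi>\<in>S. \<chi> 1 = 1"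
    "\<forall>z. (\<Sum>\<chi>\<in>S. c \<chi> * \<chi> z) = 0"
  shows "\<forall>\<chi>\<in>S. c \<chi> = 0"
  using assms
proof (induction S arbitrary: c rule: finite_induct)
  case empty then show ?case by simp
next
  case (insert \<chi>0 S)
  have hm: "\<forall>\<chi>\<in>S. \<forall>x y. \<chi> (x*y) = \<chi> x * \<chi> y" "\<forall>\<chi>\<in>S. \<chi> 1 = 1" using insert.prems by auto
  have m0: "\<And>x y. \<chi>0 (x*y) = \<chi>0 x * \<chi>0 y" "\<chi>0 1 = 1" using insert.prems by auto
  have rel: "\<And>z. c \<chi>0 * \<chi>0 z + (\<Sum>\<chi>\<in>S. c \<chi> * \<chi> z) = 0"
    using insert.prems(3) insert.hyps by (simp add: sum.insert)
  have cS: "\<forall>\<chi>\<in>S. c \<chi> = 0"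
  proof
    fix \<chi> assume chi: "\<chi> \<in> S"
    then have "\<chi> \<noteq> \<chi>0" using insert.hyps by auto
    then obtain y where y: "\<chi> y \<noteq> \<chi>0 y" by auto
    have "\<forall>z. (\<Sum>\<psi>\<in>S. (c \<psi> * (\<psi> y - \<chi>0 y)) * \<psi> z) = 0"
    proof
      fix z
      have e1: "c \<chi>0 * \<chi>0 (y*z) + (\<Sum>\<psi>\<in>S. c \<psi> * \<psi> (y*z)) = 0" by (rule rel)
      have e2: "\<chi>0 y * (c \<chi>0 * \<chi>0 z + (\<Sum>\<psi>\<in>S. c \<psi> * \<psi> z)) = 0" using rel by simp
      have e4: "(\<Sum>\<psi>\<in>S. c \<psi> * \<psi> (y*z)) = - (c \<chi>0 * \<chi>0 (y*z))" using e1
        by (simp add: eq_neg_iff_add_eq_0 add.commute)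
      have e5: "\<chi>0 y * (\<Sum>\<psi>\<in>S. c \<psi> * \<psi> z) = - (\<chi>0 y * (c \<chi>0 * \<chi>0 z))" using e2
        by (simp add: distrib_left eq_neg_iff_add_eq_0 add.commute)
      have e3: "(\<Sum>\<psi>\<in>S. c \<psi> * \<psi> (y*z)) = (\<Sum>\<psi>\<in>S. c \<psi> * (\<psi> y * \<psi> z))"
        using hm(1) by (intro sum.cong) auto
      have "(\<Sum>\<psi>\<in>S. (c \<psi> * (\<psi> y - \<chi>0 y)) * \<psi> z) = (\<Sum>\<psi>\<in>S. c \<psi> * \<psi> (y*z)) - \<chi>0 y * (\<Sum>\<psi>\<in>S. c \<psi> * \<psi> z)"
        unfolding e3 by (simp add: algebra_simps sum_subtractf sum_distrib_left)
      also have "\<dots> = 0" unfolding e4 e5 m0(1)[of y z] by (simp add: algebra_simps)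
      finally show "(\<Sum>\<psi>\<in>S. (c \<psi> * (\<psi> y - \<chi>0 y)) * \<psi> z) = 0" .
    qed
    from insert.IH[of "\<lambda>\<psi>. c \<psi> * (\<psi> y - \<chi>0 y)", OF hm this] chi
    have "c \<chi> * (\<chi> y - \<chi>0 y) = 0" by blast
    then show "c \<chi> = 0" using y by simp
  qed
  then have "\<And>z. c \<chi>0 * \<chi>0 z = 0" using rel by simp
  then have "c \<chi>0 = 0" using m0(2) by (metis mult_1_right)
  then show ?case using cS by simp
qed

lemma sum_fun_apply: "(sum f A) x = (\<Sum>i\<in>A. f i x)"
  by (induction A rule: infinite_finite_induct) auto

lemma galois_group_finite:
  fixes Kc :: "'a::field set"
  assumes "finite_ext Kc"
  shows "finite (galois_group Kc)"
proof -
  have "\<exists>Bs. finite Bs \<and> (\<forall>a. \<exists>c. (\<forall>b\<in>Bs. c b \<in> Kc) \<and> a = (\<Sum>b\<in>Bs. c b * b))"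
    using assms unfolding finite_ext_def .
  then obtain Bs where Bs: "finite Bs" "\<forall>a. \<exists>c. (\<forall>b\<in>Bs. c b \<in> Kc) \<and> a = (\<Sum>b\<in>Bs. c b * b)"
    by (elim exE conjE)
  define C where "C a = (SOME c. (\<forall>b\<in>Bs. c b \<in> Kc) \<and> a = (\<Sum>b\<in>Bs. c b * b))" for a
  have C: "(\<forall>b\<in>Bs. C a b \<in> Kc) \<and> a = (\<Sum>b\<in>Bs. C a b * b)" for a
  proof -
    have "\<exists>c. (\<forall>b\<in>Bs. c b \<in> Kc) \<and> a = (\<Sum>b\<in>Bs. c b * b)" using Bs(2) by blast
    then show ?thesis unfolding C_def by (rule someI_ex)
  qed
  interpret V: vector_space "\<lambda>(c::'a) (f::'a\<Rightarrow>'a) x. c * f x"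
    by unfold_locales (simp_all add: fun_eq_iff algebra_simps)
  define T where "T = (\<lambda>b a. C a b) ` Bs"
  have sp: "galois_group Kc \<subseteq> V.span T"
  proof
    fix \<chi> assume "\<chi> \<in> galois_group Kc"
    then have fa: "field_aut \<chi>" and fixK: "\<forall>k\<in>Kc. \<chi> k = k" by (auto simp: galois_group_def)
    have "\<chi> = (\<Sum>b\<in>Bs. (\<lambda>x. \<chi> b * C x b))"
    proof
      fix a
      have "\<chi> a = \<chi> (\<Sum>b\<in>Bs. C a b * b)" using C by metis
      also have "\<dots> = (\<Sum>b\<in>Bs. \<chi> (C a b * b))"
        using fa_basic(1,3)[OF fa] by (induction Bs rule: infinite_finite_induct) auto
      also have "\<dots> = (\<Sum>b\<in>Bs. \<chi> b * C a b)"
        using fa_basic(4)[OF fa] fixK C by (intro sum.cong) auto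
      finally show "\<chi> a = (\<Sum>b\<in>Bs. (\<lambda>x. \<chi> b * C x b)) a" by (simp add: sum_fun_apply)
    qed
    also have "\<dots> \<in> V.span T"
    proof (rule V.span_sum)
      fix b assume "b \<in> Bs"
      then have "(\<lambda>a. C a b) \<in> T" unfolding T_def by blast
      then have "(\<lambda>a. C a b) \<in> V.span T" by (rule V.span_base)
      from V.span_scale[OF this, of "\<chi> b"] show "(\<lambda>x. \<chi> b * C x b) \<in> V.span T" by simp
    qed
    finally show "\<chi> \<in> V.span T" .
  qed
  have ind: "V.independent (galois_group Kc)"
    unfolding V.independent_explicit_finite_subsets
  proof (intro allI impI ballI)
    fix S u v assume S: "S \<subseteq> galois_group Kc" "finite S"
      and eq: "(\<Sum>v\<in>S. (\<lambda>x. u v * v x)) = 0" and v: "v \<in> S"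
    have "\<forall>z. (\<Sum>\<chi>\<in>S. u \<chi> * \<chi> z) = 0"
    proof
      fix z
      have "(\<Sum>v\<in>S. (\<lambda>x. u v * v x)) z = 0" using eq by simp
      then show "(\<Sum>\<chi>\<in>S. u \<chi> * \<chi> z) = 0" by (simp add: sum_fun_apply)
    qed
    moreover have "\<forall>\<chi>\<in>S. \<forall>x y. \<chi> (x*y) = \<chi> x * \<chi> y" "\<forall>\<chi>\<in>S. \<chi> 1 = 1"
      using S fa_basic(2,4) unfolding galois_group_def by blast+
    ultimately show "u v = 0" using dedekind[OF S(2)] v by blast
  qed
  have "finite T" unfolding T_def using Bs(1) by simp
  from V.independent_span_bound[OF this ind sp] show ?thesis by blast
qed

lemma fa_id: "field_aut id" by (simp add: field_aut_def)

lemma fa_comp: "field_aut f \<Longrightarrow> field_aut g \<Longrightarrow> field_aut (f \<circ> g)"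
  by (auto simp: field_aut_def bij_comp)

lemma fa_pow: "field_aut s \<Longrightarrow> field_aut (s ^^ n)"
  by (induction n) (auto simp: fa_id fa_comp)

lemma coeff_ore:
  assumes "field_aut s"
  shows "coeff (ore_mult s p q) n = (\<Sum>i\<le>n. coeff p i * (s^^i) (coeff q (n - i)))"
proof -
  have z: "\<And>i. (s^^i) 0 = 0" using fa_basic(1)[OF fa_pow[OF assms]] by blast
  define M where "M = n + degree p + degree q"
  define f where "f i j = coeff p i * (s^^i) (coeff q j)" for i j
  have f0: "f i j = 0" if "i > degree p \<or> j > degree q" for i j
    using that by (auto simp: f_def coeff_eq_0 z)
  have "coeff (ore_mult s p q) n = (\<Sum>i\<le>degree p. \<Sum>j\<le>degree q. if i + j = n then f i j else 0)"
    unfolding f_def ore_mult_def coeff_sum by (simp add: if_distrib cong: if_cong)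
  also have "\<dots> = (\<Sum>i\<le>degree p. \<Sum>j\<le>M. if i + j = n then f i j else 0)"
  proof (rule sum.cong[OF refl])
    fix i show "(\<Sum>j\<le>degree q. if i + j = n then f i j else 0) = (\<Sum>j\<le>M. if i + j = n then f i j else 0)"
      by (rule sum.mono_neutral_left) (auto simp: M_def f0)
  qed
  also have "\<dots> = (\<Sum>i\<le>M. \<Sum>j\<le>M. if i + j = n then f i j else 0)"
    by (rule sum.mono_neutral_left) (auto simp: M_def f0 not_le intro!: sum.neutral)
  also have "\<dots> = (\<Sum>i\<le>M. if i \<le> n then f i (n - i) else 0)"
  proof (rule sum.cong[OF refl])
    fix i assume "i \<in> {..M}"
    show "(\<Sum>j\<le>M. if i + j = n then f i j else 0) = (if i \<le> n then f i (n - i) else 0)"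
    proof (cases "i \<le> n")
      case True
      have "(\<Sum>j\<le>M. if i + j = n then f i j else 0) = (\<Sum>j\<le>M. if j = n - i then f i j else 0)"
        using True by (intro sum.cong) auto
      also have "\<dots> = f i (n - i)" by (simp add: M_def)
      finally show ?thesis using True by simp
    qed auto
  qed
  also have "\<dots> = (\<Sum>i\<le>n. f i (n - i))"
    by (rule sum.mono_neutral_cong_right) (auto simp: M_def)
  finally show ?thesis by (simp add: f_def)
qed

lemma funpow_fix: "s c = c \<Longrightarrow> (s ^^ i) c = c"
  by (induction i) auto

lemma fa_sum: "field_aut h \<Longrightarrow> h (sum f A) = (\<Sum>i\<in>A. h (f i))"
  by (induction A rule: infinite_finite_induct) (auto simp: fa_basic)

lemma coeff_const_if: "coeff [:c:] i = (if i = 0 then c else 0)"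
  by (cases i) auto

lemma comm_pow: "h \<circ> s = s \<circ> h \<Longrightarrow> h ((s ^^ i) x) = (s ^^ i) (h x)"
proof (induction i arbitrary: x)
  case (Suc i)
  then show ?case by (simp add: fun_eq_iff)
qed simp

context
  fixes s :: "'a::field \<Rightarrow> 'a"
  assumes fs: "field_aut s"
begin

lemma sp: "(s^^i) (x + y) = (s^^i) x + (s^^i) y" "(s^^i) (x * y) = (s^^i) x * (s^^i) y"
  "(s^^i) 0 = 0" "(s^^i) 1 = 1" "(s^^i) (- x) = - (s^^i) x"
  using fa_basic[OF fa_pow[OF fs]] by auto

lemma ore_add_left: "ore_mult s (p + q) r = ore_mult s p r + ore_mult s q r"
  by (simp add: poly_eq_iff coeff_ore[OF fs] algebra_simps sum.distrib)

lemma ore_add_right: "ore_mult s p (q + r) = ore_mult s p q + ore_mult s p r"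
  by (simp add: poly_eq_iff coeff_ore[OF fs] algebra_simps sum.distrib sp)

lemma ore_zero_left [simp]: "ore_mult s 0 q = 0"
  by (simp add: poly_eq_iff coeff_ore[OF fs])

lemma ore_zero_right [simp]: "ore_mult s p 0 = 0"
  by (simp add: poly_eq_iff coeff_ore[OF fs] sp)

lemma ore_sum_left: "ore_mult s (sum f A) q = (\<Sum>i\<in>A. ore_mult s (f i) q)"
  by (induction A rule: infinite_finite_induct) (auto simp: ore_add_left)

lemma ore_sum_right: "ore_mult s q (sum f A) = (\<Sum>i\<in>A. ore_mult s q (f i))"
  by (induction A rule: infinite_finite_induct) (auto simp: ore_add_right)

lemma ore_smult_left: "ore_mult s (smult c p) q = smult c (ore_mult s p q)"
  by (simp add: poly_eq_iff coeff_ore[OF fs] sum_distrib_left algebra_simps)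

lemma ore_smult_right: "s c = c \<Longrightarrow> ore_mult s p (smult c q) = smult c (ore_mult s p q)"
  by (simp add: poly_eq_iff coeff_ore[OF fs] sum_distrib_left algebra_simps sp funpow_fix)

lemma ore_const_left: "ore_mult s [:c:] p = smult c p"
proof -
  have "coeff (ore_mult s [:c:] p) n = c * coeff p n" for n
  proof -
    have "coeff (ore_mult s [:c:] p) n = (\<Sum>i\<le>n. if i = 0 then c * coeff p n else 0)"
      unfolding coeff_ore[OF fs] by (intro sum.cong) (auto simp: coeff_const_if)
    also have "\<dots> = c * coeff p n" by simp
    finally show ?thesis .
  qed
  then show ?thesis by (simp add: poly_eq_iff)
qed

lemma ore_const_right: "s c = c \<Longrightarrow> ore_mult s p [:c:] = smult c p"
proof -
  assume sc: "s c = c"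
  have "coeff (ore_mult s p [:c:]) n = c * coeff p n" for n
  proof -
    have "coeff (ore_mult s p [:c:]) n = (\<Sum>i\<le>n. if i = n then coeff p i * c else 0)"
      unfolding coeff_ore[OF fs] by (intro sum.cong) (auto simp: coeff_const_if funpow_fix[of s c, OF sc] sp)
    also have "\<dots> = c * coeff p n" by simp
    finally show ?thesis .
  qed
  then show ?thesis by (simp add: poly_eq_iff)
qed

lemma ore_assoc: "ore_mult s (ore_mult s p q) r = ore_mult s p (ore_mult s q r)"
proof -
  have "coeff (ore_mult s (ore_mult s p q) r) n = coeff (ore_mult s p (ore_mult s q r)) n" for n
  proof -
    define G where "G a b = coeff p a * (s^^a) (coeff q b) * (s^^(a+b)) (coeff r (n - a - b))" for a b
    have "coeff (ore_mult s (ore_mult s p q) r) n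
        = (\<Sum>k\<le>n. (\<Sum>a\<le>k. coeff p a * (s^^a) (coeff q (k - a))) * (s^^k) (coeff r (n - k)))"
      by (simp add: coeff_ore[OF fs])
    also have "\<dots> = (\<Sum>k\<le>n. \<Sum>a\<le>k. G a (k - a))"
      by (intro sum.cong refl) (auto simp: G_def sum_distrib_right)
    also have "\<dots> = (\<Sum>(a,b)\<in>{(a,b). a + b \<le> n}. G a b)"
      by (rule sum.triangle_reindex_eq[symmetric])
    also have "\<dots> = (\<Sum>(a,b)\<in>Sigma {..n} (\<lambda>a. {..n - a}). G a b)"
      by (intro sum.cong refl) auto
    also have "\<dots> = (\<Sum>a\<le>n. \<Sum>b\<le>n - a. G a b)"
      by (rule sum.Sigma[symmetric]) auto
    also have "\<dots> = (\<Sum>a\<le>n. coeff p a * (s^^a) (\<Sum>b\<le>n - a. coeff q b * (s^^b) (coeff r (n - a - b))))"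
      by (intro sum.cong refl) (simp add: G_def fa_sum[OF fa_pow[OF fs]] sp sum_distrib_left
          funpow_add algebra_simps)
    also have "\<dots> = coeff (ore_mult s p (ore_mult s q r)) n"
      by (simp add: coeff_ore[OF fs] diff_diff_left)
    finally show ?thesis .
  qed
  then show ?thesis by (simp add: poly_eq_iff)
qed

lemma ore_act:
  assumes "field_aut h" "h \<circ> s = s \<circ> h"
  shows "map_poly h (ore_mult s p q) = ore_mult s (map_poly h p) (map_poly h q)"
  by (simp add: poly_eq_iff coeff_ore[OF fs] coeff_map_poly fa_basic[OF assms(1)] fa_sum[OF assms(1)]
      comm_pow[OF assms(2)])

end

definition evl :: "('a \<Rightarrow> 'a) \<Rightarrow> ('a \<times> 'a) list \<Rightarrow> 'a::field" where
  "evl u L = sum_list (map (\<lambda>(x,y). x * u y) L)"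

definition lmul :: "('a \<times> 'a) list \<Rightarrow> ('a \<times> 'a) list \<Rightarrow> ('a::field \<times> 'a) list" where
  "lmul L1 L2 = concat (map (\<lambda>(x1,y1). map (\<lambda>(x2,y2). (x1*x2, y1*y2)) L2) L1)"

lemma evl_lmul:
  assumes "\<And>x y. u (x*y) = u x * u y"
  shows "evl u (lmul L1 L2) = evl u L1 * evl u L2"
proof (induction L1)
  case Nil then show ?case by (simp add: evl_def lmul_def)
next
  case (Cons p L1)
  obtain x1 y1 where p: "p = (x1, y1)" by (cases p)
  have "evl u (map (\<lambda>(x2,y2). (x1*x2, y1*y2)) L2) = x1 * u y1 * evl u L2"
    by (induction L2) (auto simp: evl_def assms algebra_simps)
  then show ?case using Cons by (simp add: evl_def lmul_def p algebra_simps)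
qed

lemma lmul_set: "(a, b) \<in> set (lmul L1 L2) \<Longrightarrow> \<exists>x1 y1 x2 y2. (x1,y1) \<in> set L1 \<and> (x2,y2) \<in> set L2 \<and> a = x1*x2 \<and> b = y1*y2"
  by (auto simp: lmul_def)

lemma evl_sum: "evl u L = (\<Sum>i<length L. fst (L!i) * u (snd (L!i)))"
  by (simp add: evl_def sum_list_sum_nth lessThan_atLeast0 case_prod_unfold)

locale gal =
  fixes s :: "'a::field \<Rightarrow> 'a" and H :: "('a \<Rightarrow> 'a) set"
  assumes fs: "field_aut s"
    and fH: "finite H"
    and Haut: "\<And>h. h \<in> H \<Longrightarrow> field_aut h"
    and Hcomm: "\<And>h. h \<in> H \<Longrightarrow> h \<circ> s = s \<circ> h"
    and Hid: "id \<in> H"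
    and Hcl: "\<And>g h. g \<in> H \<Longrightarrow> h \<in> H \<Longrightarrow> g \<circ> h \<in> H"
    and Hinv: "\<And>h. h \<in> H \<Longrightarrow> inv h \<in> H"
    and sep: "\<And>g h. g \<in> H \<Longrightarrow> h \<in> H \<Longrightarrow> g \<noteq> h \<Longrightarrow> \<exists>y. s y = y \<and> g y \<noteq> h y"
begin

lemma sfix_basic:
  assumes "s x = x" "s y = y"
  shows "s (x*y) = x*y" "s (x+y) = x+y" "s (-x) = -x" "s (inverse x) = inverse x" "s 1 = 1" "s 0 = 0"
    "s (x - y) = x - y"
  using assms fa_basic[OF fs] by auto

lemma sfix_H: "h \<in> H \<Longrightarrow> s y = y \<Longrightarrow> s (h y) = h y"
  using Hcomm[of h] by (metis comp_apply)

lemma galois_basis_list: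
  "\<exists>L. (\<forall>(x,y)\<in>set L. s x = x \<and> s y = y) \<and> (\<forall>u\<in>H. evl u L = (if u = id then 1 else 0))"
proof -
  have "\<exists>L. (\<forall>(x,y)\<in>set L. s x = x \<and> s y = y) \<and> evl id L = 1 \<and> (\<forall>u\<in>S. evl u L = 0)"
    if "S \<subseteq> H - {id}" for S
  proof -
    have "finite S" using that fH finite_subset by blast
    then show ?thesis using that
    proof (induction S rule: finite_induct)
      case empty
      show ?case by (rule exI[of _ "[(1,1)]"]) (simp add: evl_def fa_basic(2)[OF fs])
    next
      case (insert t S)
      have "S \<subseteq> H - {id}" using insert.prems by blast
      then obtain L where L: "\<forall>(x,y)\<in>set L. s x = x \<and> s y = y" "evl id L = 1" "\<forall>u\<in>S. evl u L = 0"
        using insert.IH by blast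
      have tH: "t \<in> H" "t \<noteq> id" using insert.prems by auto
      obtain y where y: "s y = y" "id y \<noteq> t y" using sep[OF Hid tH(1)] tH(2) by metis
      define d where "d = inverse (y - t y)"
      define e where "e = [(d, y), (-(d * t y), 1)]"
      have ty: "s (t y) = t y" using sfix_H[OF tH(1) y(1)] .
      have sdy: "s (y - t y) = y - t y" using sfix_basic(7)[OF y(1) ty] .
      have sd: "s d = d" unfolding d_def using sfix_basic(4)[OF sdy sdy] .
      have efix: "\<forall>(x,y)\<in>set e. s x = x \<and> s y = y"
      proof -
        have "s (d * t y) = d * t y" using sfix_basic(1)[OF sd ty] .
        then have "s (- (d * t y)) = - (d * t y)" using sfix_basic(3) by blast
        then show ?thesis unfolding e_def using sd y(1) fa_basic(2)[OF fs] by auto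
      qed
      have fat: "field_aut t" using Haut[OF tH(1)] .
      have ev: "evl u e = d * (u y - t y * u 1)" for u
        by (simp add: evl_def e_def algebra_simps)
      define L' where "L' = lmul L e"
      have mulu: "\<And>x z. u (x*z) = u x * u z" if "u \<in> H" for u using Haut[OF that] fa_basic by blast
      have "\<forall>(a,b)\<in>set L'. s a = a \<and> s b = b"
      proof (clarify)
        fix a b assume "(a,b) \<in> set L'"
        then obtain x1 y1 x2 y2 where "(x1,y1) \<in> set L" "(x2,y2) \<in> set e" "a = x1*x2" "b = y1*y2"
          unfolding L'_def using lmul_set by metis
        then show "s a = a \<and> s b = b" using L(1) efix sfix_basic by fastforce
      qed
      moreover have "evl id L' = 1"
        unfolding L'_def using y(2) by (simp add: evl_lmul L(2) ev d_def)
      moreover have "\<forall>u\<in>insert t S. evl u L' = 0"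
      proof
        fix u assume u: "u \<in> insert t S"
        then have uH: "u \<in> H" using insert.prems by auto
        have "evl u L' = evl u L * evl u e" unfolding L'_def by (rule evl_lmul[OF mulu[OF uH]])
        moreover have "u = t \<Longrightarrow> evl u e = 0" using fa_basic(2)[OF fat] by (simp add: ev)
        ultimately show "evl u L' = 0" using u L(3) by auto
      qed
      ultimately show ?case by blast
    qed
  qed
  from this[of "H - {id}"] obtain L where
    L: "\<forall>(x,y)\<in>set L. s x = x \<and> s y = y" "evl id L = 1" "\<forall>u\<in>H - {id}. evl u L = 0" by auto
  then show ?thesis by (intro exI[of _ L]) auto
qed

lemma galois_basis:
  "\<exists>(m::nat) xs ys. (\<forall>i<m. s (xs i) = xs i \<and> s (ys i) = ys i) \<and>
     (\<forall>u\<in>H. (\<Sum>i<m. xs i * u (ys i)) = (if u = id then 1 else 0))"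
proof -
  obtain L where L: "\<forall>(x,y)\<in>set L. s x = x \<and> s y = y" "\<forall>u\<in>H. evl u L = (if u = id then 1 else 0)"
    using galois_basis_list by blast
  have A: "\<forall>i<length L. s (fst (L!i)) = fst (L!i) \<and> s (snd (L!i)) = snd (L!i)"
  proof (intro allI impI)
    fix i assume "i < length L"
    then have "L ! i \<in> set L" by simp
    then show "s (fst (L!i)) = fst (L!i) \<and> s (snd (L!i)) = snd (L!i)" using L(1) by auto
  qed
  have B: "\<forall>u\<in>H. (\<Sum>i<length L. fst (L!i) * u (snd (L!i))) = (if u = id then 1 else 0)"
    using L(2) by (simp add: evl_sum)
  show ?thesis
    by (rule exI[where x="length L"], rule exI[where x="\<lambda>i. fst (L!i)"],
        rule exI[where x="\<lambda>i. snd (L!i)"]) (use A B in blast)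
qed

end

definition trH :: "('a \<Rightarrow> 'a) set \<Rightarrow> 'a::field poly \<Rightarrow> 'a poly" where
  "trH H z = (\<Sum>h\<in>H. map_poly h z)"

context gal begin

abbreviation "Z \<equiv> ring_center UNIV (ore_mult s)"
abbreviation "R \<equiv> coinv Z ore_act H"
abbreviation "tr \<equiv> trH H"

lemma h0: "h \<in> H \<Longrightarrow> h 0 = 0" using fa_basic(1)[OF Haut] by blast

lemma coeff_act: "h \<in> H \<Longrightarrow> coeff (map_poly h p) n = h (coeff p n)"
  by (simp add: coeff_map_poly h0)

lemma act_add: "h \<in> H \<Longrightarrow> map_poly h (p + q) = map_poly h p + map_poly h q"
  by (simp add: poly_eq_iff coeff_act fa_basic[OF Haut])

lemma act_smult: "h \<in> H \<Longrightarrow> map_poly h (smult c p) = smult (h c) (map_poly h p)"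
  by (simp add: poly_eq_iff coeff_act fa_basic[OF Haut])

lemma act_sum: "h \<in> H \<Longrightarrow> map_poly h (sum f A) = (\<Sum>i\<in>A. map_poly h (f i))"
  by (simp add: poly_eq_iff coeff_act coeff_sum fa_sum[OF Haut])

lemma act_comp: "g \<in> H \<Longrightarrow> h \<in> H \<Longrightarrow> map_poly g (map_poly h p) = map_poly (g \<circ> h) p"
  by (simp add: map_poly_map_poly h0)

lemma act_mul: "h \<in> H \<Longrightarrow> map_poly h (ore_mult s p q) = ore_mult s (map_poly h p) (map_poly h q)"
  by (rule ore_act[OF fs Haut Hcomm])

lemma act_inv: "h \<in> H \<Longrightarrow> map_poly h (map_poly (inv h) p) = p"
proof -
  assume hH: "h \<in> H"
  have "surj h" using fa_basic(8)[OF Haut[OF hH]] .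
  then have "h \<circ> inv h = id" by (simp add: surj_iff)
  then show ?thesis using act_comp[OF hH Hinv[OF hH]] by simp
qed

lemma act_const: "h \<in> H \<Longrightarrow> map_poly h [:c:] = [:h c:]"
  by (simp add: poly_eq_iff coeff_act coeff_const_if h0)

lemma memZ: "z \<in> Z \<longleftrightarrow> (\<forall>c. ore_mult s z c = ore_mult s c z)"
  by (simp add: ring_center_def)

lemma Z_add: "a \<in> Z \<Longrightarrow> b \<in> Z \<Longrightarrow> a + b \<in> Z"
  by (simp add: memZ ore_add_left[OF fs] ore_add_right[OF fs])

lemma Z_0: "0 \<in> Z" by (simp add: memZ fs)

lemma Z_sum: "(\<And>i. i \<in> A \<Longrightarrow> f i \<in> Z) \<Longrightarrow> sum f A \<in> Z"
  by (induction A rule: infinite_finite_induct) (auto simp: Z_0 Z_add)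

lemma Z_smult: "s c = c \<Longrightarrow> a \<in> Z \<Longrightarrow> smult c a \<in> Z"
  by (simp add: memZ ore_smult_left[OF fs] ore_smult_right[OF fs])

lemma Z_const: "s c = c \<Longrightarrow> [:c:] \<in> Z"
  by (simp add: memZ ore_const_left[OF fs] ore_const_right[OF fs])

lemma Z_1: "1 \<in> Z"
  using Z_const[of 1] fa_basic(2)[OF fs] by (simp add: one_pCons)

lemma Z_minus: "a \<in> Z \<Longrightarrow> - a \<in> Z"
  using Z_smult[of "-1" a] fa_basic(2,5)[OF fs] by simp

lemma Z_diff: "a \<in> Z \<Longrightarrow> b \<in> Z \<Longrightarrow> a - b \<in> Z"
  using Z_add[of a "-b"] Z_minus[of b] by simp

lemma Z_mul: "a \<in> Z \<Longrightarrow> b \<in> Z \<Longrightarrow> ore_mult s a b \<in> Z"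
  unfolding memZ by (metis ore_assoc[OF fs])

lemma Z_act: "a \<in> Z \<Longrightarrow> h \<in> H \<Longrightarrow> map_poly h a \<in> Z"
  unfolding memZ
proof
  fix c assume a: "\<forall>c. ore_mult s a c = ore_mult s c a" and hH: "h \<in> H"
  have "ore_mult s (map_poly h a) c = ore_mult s (map_poly h a) (map_poly h (map_poly (inv h) c))"
    using act_inv[OF hH] by simp
  also have "\<dots> = map_poly h (ore_mult s a (map_poly (inv h) c))" using act_mul[OF hH] by simp
  also have "\<dots> = map_poly h (ore_mult s (map_poly (inv h) c) a)" using a by simp
  also have "\<dots> = ore_mult s (map_poly h (map_poly (inv h) c)) (map_poly h a)" using act_mul[OF hH] by simp
  also have "\<dots> = ore_mult s c (map_poly h a)" using act_inv[OF hH] by simp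
  finally show "ore_mult s (map_poly h a) c = ore_mult s c (map_poly h a)" .
qed

lemma coeff_tr: "coeff (tr p) n = (\<Sum>h\<in>H. h (coeff p n))"
  by (simp add: trH_def coeff_sum coeff_act)

lemma tr_Z: "z \<in> Z \<Longrightarrow> tr z \<in> Z"
  unfolding trH_def by (rule Z_sum) (rule Z_act)

lemma tr_inv: "g \<in> H \<Longrightarrow> map_poly g (tr z) = tr z"
proof -
  assume gH: "g \<in> H"
  have "map_poly g (tr z) = (\<Sum>h\<in>H. map_poly (g \<circ> h) z)"
    unfolding trH_def by (simp add: act_sum[OF gH] act_comp[OF gH])
  also have "\<dots> = (\<Sum>h\<in>(\<lambda>h. g \<circ> h) ` H. map_poly h z)"
  proof -
    have "inj_on (\<lambda>h. g \<circ> h) H"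
    proof (rule inj_onI)
      fix h1 h2 assume "g \<circ> h1 = g \<circ> h2"
      moreover have "inj g" using fa_basic(7)[OF Haut[OF gH]] .
      ultimately show "h1 = h2" by (metis fun.inj_map inj_eq)
    qed
    then show ?thesis by (simp add: sum.reindex)
  qed
  also have "(\<lambda>h. g \<circ> h) ` H = H"
  proof
    show "(\<lambda>h. g \<circ> h) ` H \<subseteq> H" using Hcl[OF gH] by auto
    show "H \<subseteq> (\<lambda>h. g \<circ> h) ` H"
    proof
      fix h assume hH: "h \<in> H"
      have "surj g" using fa_basic(8)[OF Haut[OF gH]] .
      then have "g \<circ> (inv g \<circ> h) = h" by (simp add: surj_iff o_assoc)
      moreover have "inv g \<circ> h \<in> H" using Hcl[OF Hinv[OF gH] hH] .
      ultimately show "h \<in> (\<lambda>h. g \<circ> h) ` H" by (metis image_eqI)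
    qed
  qed
  finally show ?thesis by (simp add: trH_def)
qed

lemma tr_R: "z \<in> Z \<Longrightarrow> tr z \<in> R"
  by (simp add: coinv_def ore_act_def tr_Z tr_inv)

lemma R_Z: "r \<in> R \<Longrightarrow> r \<in> Z" by (simp add: coinv_def)

lemma R_fix: "r \<in> R \<Longrightarrow> h \<in> H \<Longrightarrow> map_poly h r = r" by (simp add: coinv_def ore_act_def)

lemma tr_add: "tr (a + b) = tr a + tr b"
  by (simp add: trH_def act_add sum.distrib)

lemma tr_mulR: "r \<in> R \<Longrightarrow> tr (ore_mult s r z) = ore_mult s r (tr z)"
  by (simp add: trH_def act_mul R_fix ore_sum_right[OF fs])

lemma expand:
  assumes gb: "\<forall>u\<in>H. (\<Sum>i<m. xs i * u (ys i)) = (if u = id then 1 else 0)"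
  shows "(\<Sum>i<m. smult (xs i) (tr (smult (ys i) z))) = z"
proof -
  have "coeff (\<Sum>i<m. smult (xs i) (tr (smult (ys i) z))) n = coeff z n" for n
  proof -
    have "coeff (\<Sum>i<m. smult (xs i) (tr (smult (ys i) z))) n
        = (\<Sum>i<m. \<Sum>h\<in>H. xs i * h (ys i) * h (coeff z n))"
      by (simp add: coeff_sum coeff_tr sum_distrib_left fa_basic(4)[OF Haut] mult.assoc)
    also have "\<dots> = (\<Sum>h\<in>H. (\<Sum>i<m. xs i * h (ys i)) * h (coeff z n))"
      by (simp add: sum.swap[of _ "{..<m}"] sum_distrib_right)
    also have "\<dots> = (\<Sum>h\<in>H. if h = id then coeff z n else 0)"
      using gb by (intro sum.cong) auto
    also have "\<dots> = coeff z n" using Hid fH by simp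
    finally show ?thesis .
  qed
  then show ?thesis by (simp add: poly_eq_iff)
qed

end

definition lext :: "('p \<Rightarrow> int \<Rightarrow> 'b::ab_group_add) \<Rightarrow> ('p \<Rightarrow>\<^sub>0 int) \<Rightarrow> 'b" where
  "lext F s = (\<Sum>p\<in>Poly_Mapping.keys s. F p (Poly_Mapping.lookup s p))"

definition addF :: "('p \<Rightarrow> int \<Rightarrow> 'b::ab_group_add) \<Rightarrow> bool" where
  "addF F \<longleftrightarrow> (\<forall>p k l. F p (k + l) = F p k + F p l)"

lemma addF_0: "addF F \<Longrightarrow> F p 0 = 0"
  unfolding addF_def by (metis add.right_neutral add_left_cancel)

lemma lext_superset:
  assumes "addF F" "finite U" "Poly_Mapping.keys s \<subseteq> U"
  shows "lext F s = (\<Sum>p\<in>U. F p (Poly_Mapping.lookup s p))"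
  unfolding lext_def
  by (rule sum.mono_neutral_left) (use assms addF_0 in \<open>auto simp: in_keys_iff\<close>)

lemma lext_0 [simp]: "lext F 0 = 0" by (simp add: lext_def)

lemma lext_add:
  assumes "addF F"
  shows "lext F (s + t) = lext F s + lext F t"
proof -
  let ?U = "Poly_Mapping.keys s \<union> Poly_Mapping.keys t"
  have f: "finite ?U" by simp
  have "lext F (s + t) = (\<Sum>p\<in>?U. F p (Poly_Mapping.lookup (s + t) p))"
    by (rule lext_superset[OF assms f]) (rule keys_add)
  also have "\<dots> = (\<Sum>p\<in>?U. F p (Poly_Mapping.lookup s p)) + (\<Sum>p\<in>?U. F p (Poly_Mapping.lookup t p))"
    using assms by (simp add: lookup_add addF_def sum.distrib)
  also have "\<dots> = lext F s + lext F t"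
    by (simp add: lext_superset[OF assms f])
  finally show ?thesis .
qed

lemma lext_minus: "addF F \<Longrightarrow> lext F (- s) = - lext F s"
  using lext_add[of F s "-s"] by (simp add: eq_neg_iff_add_eq_0 add.commute)

lemma lext_diff: "addF F \<Longrightarrow> lext F (s - t) = lext F s - lext F t"
  using lext_add[of F s "-t"] lext_minus[of F t] by simp

lemma lext_single: "addF F \<Longrightarrow> lext F (Poly_Mapping.single p k) = F p k"
  using lext_superset[of F "{p}" "Poly_Mapping.single p k"] by simp

lemma lext_sum: "addF F \<Longrightarrow> lext F (sum g A) = (\<Sum>i\<in>A. lext F (g i))"
  by (induction A rule: infinite_finite_induct) (auto simp: lext_add)

definition cn :: "nat \<Rightarrow> 'b \<Rightarrow> 'b::ab_group_add" where "cn n x = (\<Sum>i<n. x)"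

lemma cn_add: "cn (a + b) x = cn a x + cn b x"
  by (induction b) (auto simp: cn_def)

lemma cn_diff:
  assumes "int a - int b = int a' - int b'"
  shows "cn a x - cn b x = cn a' x - cn b' x"
proof -
  have "a + b' = a' + b" using assms by linarith
  then have "cn a x + cn b' x = cn a' x + cn b x" by (metis cn_add)
  then show ?thesis by (simp add: algebra_simps)
qed

definition zm :: "int \<Rightarrow> 'b \<Rightarrow> 'b::ab_group_add" where
  "zm k x = cn (nat k) x - cn (nat (- k)) x"

lemma zm_add: "zm (k + l) x = zm k x + zm l x"
proof -
  have "zm (k + l) x = cn (nat k + nat l) x - cn (nat (-k) + nat (-l)) x"
    unfolding zm_def by (rule cn_diff) linarith
  then show ?thesis by (simp add: zm_def cn_add algebra_simps)
qed

lemma zm_1 [simp]: "zm 1 x = x" by (simp add: zm_def cn_def)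

lemma addF_zm: "addF (\<lambda>p k. zm k (g p))"
  by (simp add: addF_def zm_add)

lemma zm_hom:
  assumes "\<And>a b. f (a + b) = f a + f b"
  shows "f (zm k x) = zm k (f x)"
proof -
  have f0: "f 0 = 0" using assms[of 0 0] by (metis add_cancel_right_right)
  have fm: "f (a - b) = f a - f b" for a b using assms[of "a - b" b] by (simp add: algebra_simps)
  have "f (cn n x) = cn n (f x)" for n
    by (induction n) (auto simp: cn_def f0 assms)
  then show ?thesis by (simp add: zm_def fm)
qed

lemma zm_ring: "zm k (x::'r::ring_1) = of_int k * x"
proof -
  have c: "cn n x = of_nat n * x" for n by (induction n) (auto simp: cn_def algebra_simps)
  have "of_int k = (of_nat (nat k) - of_nat (nat (-k)) :: 'r)"
  proof -
    have "k = int (nat k) - int (nat (-k))" by linarith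
    then have "(of_int k :: 'r) = of_int (int (nat k) - int (nat (-k)))" by (rule arg_cong)
    then show ?thesis by (simp only: of_int_diff of_int_of_nat_eq)
  qed
  then show ?thesis by (simp add: zm_def c left_diff_distrib)
qed

lemma zm_closed:
  assumes "0 \<in> S" "\<And>a b. a \<in> S \<Longrightarrow> b \<in> S \<Longrightarrow> a + b \<in> S" "\<And>a. a \<in> S \<Longrightarrow> - a \<in> S" "x \<in> S"
  shows "zm k x \<in> S"
proof -
  have "cn n x \<in> S" for n by (induction n) (auto simp: cn_def assms)
  then show ?thesis unfolding zm_def using assms(2,3) by (metis diff_conv_add_uminus)
qed

lemma sum_closed:
  assumes "0 \<in> S" "\<And>a b. a \<in> S \<Longrightarrow> b \<in> S \<Longrightarrow> a + b \<in> S" "\<And>i. i \<in> A \<Longrightarrow> f i \<in> S"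
  shows "sum f A \<in> S"
  using assms(3) by (induction A rule: infinite_finite_induct) (auto simp: assms(1,2))

lemma trel_diff: "a \<in> tensor_rel Lc ract Mc R mul \<Longrightarrow> b \<in> tensor_rel Lc ract Mc R mul \<Longrightarrow>
    a - b \<in> tensor_rel Lc ract Mc R mul"
  using tensor_rel.plus[of a Lc ract Mc R mul "-b"] tensor_rel.uminus by fastforce

lemma trel_sum: "(\<And>i. i \<in> A \<Longrightarrow> f i \<in> tensor_rel Lc ract Mc R mul) \<Longrightarrow>
    sum f A \<in> tensor_rel Lc ract Mc R mul"
  by (induction A rule: infinite_finite_induct) (auto intro: tensor_rel.zero tensor_rel.plus)

lemma trel_0l: "0 \<in> Lc \<Longrightarrow> z \<in> Mc \<Longrightarrow> frag_of (0, z) \<in> tensor_rel Lc ract Mc R mul"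
  using tensor_rel.uminus[OF tensor_rel.addl[of 0 Lc 0 z Mc ract R mul]] by simp

lemma trel_0r: "m \<in> Lc \<Longrightarrow> 0 \<in> Mc \<Longrightarrow> frag_of (m, 0) \<in> tensor_rel Lc ract Mc R mul"
  using tensor_rel.uminus[OF tensor_rel.addr[of m Lc 0 Mc 0 ract R mul]] by simp

lemma trel_addl': "a \<in> Lc \<Longrightarrow> b \<in> Lc \<Longrightarrow> a - b \<in> Lc \<Longrightarrow> z \<in> Mc \<Longrightarrow>
    frag_of (a, z) - frag_of (a - b, z) - frag_of (b, z) \<in> tensor_rel Lc ract Mc R mul"
  using tensor_rel.addl[of "a - b" Lc b z Mc ract R mul] by simp

lemma trel_sumr:
  assumes "m \<in> Lc" "0 \<in> Mc" "\<And>a b. a \<in> Mc \<Longrightarrow> b \<in> Mc \<Longrightarrow> a + b \<in> Mc" "finite J"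
    "\<And>j. j \<in> J \<Longrightarrow> w j \<in> Mc"
  shows "frag_of (m, sum w J) - (\<Sum>j\<in>J. frag_of (m, w j)) \<in> tensor_rel Lc ract Mc R mul"
  using assms(4,5)
proof (induction J rule: finite_induct)
  case empty then show ?case using trel_0r[OF assms(1,2)] by simp
next
  case (insert j J)
  have wJ: "sum w J \<in> Mc" using sum_closed[of Mc, OF assms(2,3)] insert.prems by blast
  have wj: "w j \<in> Mc" using insert.prems by blast
  have A: "frag_of (m, w j + sum w J) - frag_of (m, w j) - frag_of (m, sum w J) \<in> tensor_rel Lc ract Mc R mul"
    by (rule tensor_rel.addr[OF assms(1) wj wJ])
  have B: "frag_of (m, sum w J) - (\<Sum>j\<in>J. frag_of (m, w j)) \<in> tensor_rel Lc ract Mc R mul"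
    using insert by blast
  have "frag_of (m, sum w (insert j J)) - (\<Sum>j\<in>insert j J. frag_of (m, w j))
      = (frag_of (m, w j + sum w J) - frag_of (m, w j) - frag_of (m, sum w J))
        + (frag_of (m, sum w J) - (\<Sum>j\<in>J. frag_of (m, w j)))"
    using insert.hyps by (simp add: algebra_simps)
  then show ?case using tensor_rel.plus[OF A B] by simp
qed

lemma kill:
  assumes aF: "addF F" and s: "s \<in> tensor_rel Lc ract Mc R mul"
    and addl: "\<And>m m' z. m \<in> Lc \<Longrightarrow> m' \<in> Lc \<Longrightarrow> z \<in> Mc \<Longrightarrow> F (m + m', z) 1 = F (m, z) 1 + F (m', z) 1"
    and addr: "\<And>m z z'. m \<in> Lc \<Longrightarrow> z \<in> Mc \<Longrightarrow> z' \<in> Mc \<Longrightarrow> F (m, z + z') 1 = F (m, z) 1 + F (m, z') 1"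
    and bal: "\<And>m r z. m \<in> Lc \<Longrightarrow> r \<in> R \<Longrightarrow> z \<in> Mc \<Longrightarrow> F (ract m r, z) 1 = F (m, mul r z) 1"
  shows "lext F s = 0"
  using s
proof (induction rule: tensor_rel.induct)
  case zero then show ?case by simp
next
  case (addl m m' z) then show ?case by (simp add: lext_diff[OF aF] lext_single[OF aF] assms(3))
next
  case (addr m z z') then show ?case by (simp add: lext_diff[OF aF] lext_single[OF aF] assms(4))
next
  case (bal m r z) then show ?case by (simp add: lext_diff[OF aF] lext_single[OF aF] assms(5))
next
  case (plus s t) then show ?case by (simp add: lext_add[OF aF])
next
  case (uminus s) then show ?case by (simp add: lext_minus[OF aF])
qed

lemma decomp:
  fixes Lc :: "'l::ab_group_add set" and Mc R :: "'c::ab_group_add set"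
    and ract :: "'l \<Rightarrow> 'c \<Rightarrow> 'l" and mul :: "'c \<Rightarrow> 'c \<Rightarrow> 'c"
    and X :: "nat \<Rightarrow> 'c" and \<mu> :: "nat \<Rightarrow> 'c \<Rightarrow> 'c"
  assumes L0: "0 \<in> Lc" and Ladd: "\<And>a b. a \<in> Lc \<Longrightarrow> b \<in> Lc \<Longrightarrow> a + b \<in> Lc"
    and Lminus: "\<And>a. a \<in> Lc \<Longrightarrow> - a \<in> Lc"
    and Lract: "\<And>m r. m \<in> Lc \<Longrightarrow> r \<in> R \<Longrightarrow> ract m r \<in> Lc"
    and M0: "0 \<in> Mc" and Madd: "\<And>a b. a \<in> Mc \<Longrightarrow> b \<in> Mc \<Longrightarrow> a + b \<in> Mc"
    and X: "\<And>j. j < n \<Longrightarrow> X j \<in> Mc"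
    and mu: "\<And>j z. j < n \<Longrightarrow> z \<in> Mc \<Longrightarrow> \<mu> j z \<in> R"
    and Mmul: "\<And>j z. j < n \<Longrightarrow> z \<in> Mc \<Longrightarrow> mul (\<mu> j z) (X j) \<in> Mc"
    and ex: "\<And>z. z \<in> Mc \<Longrightarrow> z = (\<Sum>j<n. mul (\<mu> j z) (X j))"
    and keys: "Poly_Mapping.keys s \<subseteq> Lc \<times> Mc"
  shows "s - (\<Sum>j<n. frag_of (lext (\<lambda>p k. zm k (ract (fst p) (\<mu> j (snd p)))) s, X j))
           \<in> tensor_rel Lc ract Mc R mul"
proof -
  define \<Theta> where "\<Theta> j s = lext (\<lambda>p k. zm k (ract (fst p) (\<mu> j (snd p)))) s" for j s
  let ?T = "tensor_rel Lc ract Mc R mul"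
  have aF: "addF (\<lambda>p k. zm k (ract (fst p) (\<mu> j (snd p))))" for j by (rule addF_zm)
  have Ldiff: "a \<in> Lc \<Longrightarrow> b \<in> Lc \<Longrightarrow> a - b \<in> Lc" for a b
    using Ladd Lminus by (metis diff_conv_add_uminus)
  have Th: "\<Theta> j s \<in> Lc" if "j < n" "Poly_Mapping.keys s \<subseteq> Lc \<times> Mc" for j s
    unfolding \<Theta>_def lext_def
  proof (rule sum_closed[of Lc, OF L0 Ladd])
    fix p assume "p \<in> Poly_Mapping.keys s"
    then have "fst p \<in> Lc" "snd p \<in> Mc" using that(2) by auto
    then show "zm (Poly_Mapping.lookup s p) (ract (fst p) (\<mu> j (snd p))) \<in> Lc"
      using zm_closed[of Lc, OF L0 Ladd Lminus] Lract mu that(1) by blast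
  qed
  have "Poly_Mapping.keys s \<subseteq> Lc \<times> Mc \<and> s - (\<Sum>j<n. frag_of (\<Theta> j s, X j)) \<in> ?T"
    using keys
  proof (induction rule: frag_induction)
    case zero
    have "(\<Sum>j<n. frag_of (\<Theta> j 0, X j)) \<in> ?T"
      by (rule trel_sum) (simp add: \<Theta>_def trel_0l[OF L0] X)
    then show ?case using tensor_rel.uminus by fastforce
  next
    case (one x)
    obtain m z where x: "x = (m, z)" "m \<in> Lc" "z \<in> Mc" using one by auto
    have Tx: "\<Theta> j (frag_of (m, z)) = ract m (\<mu> j z)" for j
      by (simp add: \<Theta>_def lext_single[OF aF])
    have e: "frag_of (m, z) = frag_of (m, \<Sum>j<n. mul (\<mu> j z) (X j))"
      using ex[OF x(3)] by (rule arg_cong[where f="\<lambda>w. frag_of (m, w)"])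
    have A: "frag_of (m, \<Sum>j<n. mul (\<mu> j z) (X j)) - (\<Sum>j<n. frag_of (m, mul (\<mu> j z) (X j))) \<in> ?T"
      by (rule trel_sumr[OF x(2) M0 Madd]) (auto simp: Mmul x(3))
    have B: "(\<Sum>j<n. frag_of (m, mul (\<mu> j z) (X j)) - frag_of (ract m (\<mu> j z), X j)) \<in> ?T"
    proof (rule trel_sum)
      fix j assume "j \<in> {..<n}"
      then have "j < n" by simp
      from tensor_rel.bal[OF x(2) mu[OF this x(3)] X[OF this], of ract mul]
      show "frag_of (m, mul (\<mu> j z) (X j)) - frag_of (ract m (\<mu> j z), X j) \<in> ?T"
        using tensor_rel.uminus by fastforce
    qed
    have "frag_of (m, z) - (\<Sum>j<n. frag_of (\<Theta> j (frag_of (m, z)), X j))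
       = (frag_of (m, \<Sum>j<n. mul (\<mu> j z) (X j)) - (\<Sum>j<n. frag_of (m, mul (\<mu> j z) (X j))))
         + (\<Sum>j<n. frag_of (m, mul (\<mu> j z) (X j)) - frag_of (ract m (\<mu> j z), X j))"
      unfolding Tx by (subst e) (simp add: sum_subtractf)
    then show ?case using tensor_rel.plus[OF A B] x by simp
  next
    case (diff a b)
    have ka: "Poly_Mapping.keys a \<subseteq> Lc \<times> Mc" and kb: "Poly_Mapping.keys b \<subseteq> Lc \<times> Mc"
      using diff by auto
    have kab: "Poly_Mapping.keys (a - b) \<subseteq> Lc \<times> Mc"
      using ka kb keys_diff[of a b] by blast
    have Td: "\<Theta> j (a - b) = \<Theta> j a - \<Theta> j b" for j by (simp add: \<Theta>_def lext_diff[OF aF])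
    have C: "(\<Sum>j<n. frag_of (\<Theta> j a, X j) - frag_of (\<Theta> j a - \<Theta> j b, X j) - frag_of (\<Theta> j b, X j)) \<in> ?T"
    proof (rule trel_sum)
      fix j assume "j \<in> {..<n}"
      then have j: "j < n" by simp
      show "frag_of (\<Theta> j a, X j) - frag_of (\<Theta> j a - \<Theta> j b, X j) - frag_of (\<Theta> j b, X j) \<in> ?T"
        by (rule trel_addl') (use Th[OF j ka] Th[OF j kb] Ldiff X[OF j] in auto)
    qed
    have E: "(a - b) - (\<Sum>j<n. frag_of (\<Theta> j (a - b), X j))
       = ((a - (\<Sum>j<n. frag_of (\<Theta> j a, X j))) - (b - (\<Sum>j<n. frag_of (\<Theta> j b, X j))))
         + (\<Sum>j<n. frag_of (\<Theta> j a, X j) - frag_of (\<Theta> j a - \<Theta> j b, X j) - frag_of (\<Theta> j b, X j))"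
      by (simp add: Td sum_subtractf sum.distrib algebra_simps)
    have D: "(a - (\<Sum>j<n. frag_of (\<Theta> j a, X j))) - (b - (\<Sum>j<n. frag_of (\<Theta> j b, X j))) \<in> ?T"
      using diff by (blast intro: trel_diff)
    have "(a - b) - (\<Sum>j<n. frag_of (\<Theta> j (a - b), X j)) \<in> ?T"
      unfolding E by (rule tensor_rel.plus[OF D C])
    then show ?case using kab by blast
  qed
  then show ?thesis unfolding \<Theta>_def by blast
qed

lemma add_hom_0:
  fixes f :: "'a::comm_monoid_add \<Rightarrow> 'b::ab_group_add"
  assumes "\<And>a b. f (a + b) = f a + f b"
  shows "f 0 = 0"
proof -
  have h: "f 0 = f 0 + f 0" using assms[of 0 0] by (simp only: add_0_left)
  have "f 0 + f 0 = f 0 + 0" using h[symmetric] by (simp only: add_0_right)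
  then show ?thesis by (rule add_left_imp_eq)
qed

lemma add_sum_hom:
  fixes f :: "'a::comm_monoid_add \<Rightarrow> 'b::ab_group_add"
  assumes "\<And>a b. f (a + b) = f a + f b"
  shows "f (sum g A) = (\<Sum>i\<in>A. f (g i))"
proof -
  have f0: "f 0 = 0" using add_hom_0[of f] assms by blast
  show ?thesis by (induction A rule: infinite_finite_induct) (auto simp: f0 assms)
qed

context gal begin

lemma mulX: "s x = x \<Longrightarrow> ore_mult s r [:x:] = smult x r"
  by (rule ore_const_right[OF fs])

lemma mu_R: "z \<in> Z \<Longrightarrow> s y = y \<Longrightarrow> tr (smult y z) \<in> R"
  using tr_R Z_smult by blast

lemma mu_Z: "z \<in> Z \<Longrightarrow> s y = y \<Longrightarrow> tr (smult y z) \<in> Z"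
  using mu_R R_Z by blast

lemma mu_add: "tr (smult y (a + b)) = tr (smult y a) + tr (smult y b)"
  by (simp add: smult_add_right tr_add)

lemma mu_bal: "r \<in> R \<Longrightarrow> s y = y \<Longrightarrow> tr (smult y (ore_mult s r z)) = ore_mult s r (tr (smult y z))"
proof -
  assume r: "r \<in> R" and y: "s y = y"
  have "smult y (ore_mult s r z) = ore_mult s r (smult y z)" by (rule ore_smult_right[OF fs y, symmetric])
  then show ?thesis using tr_mulR[OF r] by simp
qed

lemma kill_mod:
  assumes rm: "rmodule R (ore_mult s) sm" and y: "s y = y"
    and t: "t \<in> tensor_rel UNIV (\<lambda>m r. sm r m) Z R (ore_mult s)"
  shows "lext (\<lambda>p k. zm k (sm (tr (smult y (snd p))) (fst p))) t = 0"
proof -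
  have r1: "\<And>r m n. r \<in> R \<Longrightarrow> sm r (m + n) = sm r m + sm r n"
    and r2: "\<And>r q m. r \<in> R \<Longrightarrow> q \<in> R \<Longrightarrow> sm (r + q) m = sm r m + sm q m"
    and r3: "\<And>r q m. r \<in> R \<Longrightarrow> q \<in> R \<Longrightarrow> sm (ore_mult s r q) m = sm r (sm q m)"
    using rm unfolding rmodule_def by blast+
  show ?thesis
  proof (rule kill[OF addF_zm t])
    fix m m' z assume "z \<in> Z"
    then show "zm 1 (sm (tr (smult y (snd (m + m', z)))) (fst (m + m', z))) =
      zm 1 (sm (tr (smult y (snd (m, z)))) (fst (m, z))) + zm 1 (sm (tr (smult y (snd (m', z)))) (fst (m', z)))"
      using r1 mu_R[OF _ y] by simp
  next
    fix m z z' assume "z \<in> Z" "z' \<in> Z"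
    then show "zm 1 (sm (tr (smult y (snd (m, z + z')))) (fst (m, z + z'))) =
      zm 1 (sm (tr (smult y (snd (m, z)))) (fst (m, z))) + zm 1 (sm (tr (smult y (snd (m, z')))) (fst (m, z')))"
      using r2 mu_R[OF _ y] by (simp add: mu_add)
  next
    fix m r z assume r: "r \<in> R" and z: "z \<in> Z"
    have muZ: "tr (smult y z) \<in> Z" using mu_Z[OF z y] .
    have "sm (tr (smult y (ore_mult s r z))) m = sm (ore_mult s r (tr (smult y z))) m"
      using mu_bal[OF r y] by simp
    also have "\<dots> = sm (ore_mult s (tr (smult y z)) r) m" using muZ by (simp add: memZ)
    also have "\<dots> = sm (tr (smult y z)) (sm r m)" using r3 r mu_R[OF z y] by blast
    finally show "zm 1 (sm (tr (smult y (snd (sm r m, z)))) (fst (sm r m, z))) =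
      zm 1 (sm (tr (smult y (snd (m, ore_mult s r z)))) (fst (m, ore_mult s r z)))" by simp
  qed
qed

lemma tmap_lext:
  assumes lin: "rlinear R sm sn f" and keys: "Poly_Mapping.keys t \<subseteq> UNIV \<times> Z" and y: "s y = y"
  shows "lext (\<lambda>p k. zm k (sn (tr (smult y (snd p))) (fst p))) (tmap f t)
       = f (lext (\<lambda>p k. zm k (sm (tr (smult y (snd p))) (fst p))) t)"
proof -
  have fa: "\<And>a b. f (a + b) = f a + f b" and fl: "\<And>r m. r \<in> R \<Longrightarrow> f (sm r m) = sn r (f m)"
    using lin unfolding rlinear_def by blast+
  have "lext (\<lambda>p k. zm k (sn (tr (smult y (snd p))) (fst p))) (tmap f t)
      = (\<Sum>p\<in>Poly_Mapping.keys t. zm (Poly_Mapping.lookup t p) (sn (tr (smult y (snd p))) (f (fst p))))"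
    unfolding tmap_def by (simp add: lext_sum[OF addF_zm] lext_single[OF addF_zm])
  also have "\<dots> = (\<Sum>p\<in>Poly_Mapping.keys t. f (zm (Poly_Mapping.lookup t p) (sm (tr (smult y (snd p))) (fst p))))"
  proof (rule sum.cong[OF refl])
    fix p assume "p \<in> Poly_Mapping.keys t"
    then have "snd p \<in> Z" using keys by auto
    then show "zm (Poly_Mapping.lookup t p) (sn (tr (smult y (snd p))) (f (fst p))) =
      f (zm (Poly_Mapping.lookup t p) (sm (tr (smult y (snd p))) (fst p)))"
      using fl mu_R[OF _ y] zm_hom[of f, OF fa] by simp
  qed
  also have "\<dots> = f (lext (\<lambda>p k. zm k (sm (tr (smult y (snd p))) (fst p))) t)"
    unfolding lext_def by (rule add_sum_hom[OF fa, symmetric])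
  finally show ?thesis .
qed

lemma X_Z: "s x = x \<Longrightarrow> [:x:] \<in> Z" by (rule Z_const)

lemma flat: "flat_over R Z (ore_mult s) TYPE('m::ab_group_add) TYPE('n::ab_group_add)"
  unfolding flat_over_def
proof (intro allI impI, elim conjE)
  fix sm :: "'a poly \<Rightarrow> 'm \<Rightarrow> 'm" and sn :: "'a poly \<Rightarrow> 'n \<Rightarrow> 'n" and f t
  assume rmM: "rmodule R (ore_mult s) sm" and rmN: "rmodule R (ore_mult s) sn"
    and lin: "rlinear R sm sn f" and inj: "inj f"
    and keys: "Poly_Mapping.keys t \<subseteq> UNIV \<times> Z"
    and tN: "tmap f t \<in> tensor_rel UNIV (\<lambda>n r. sn r n) Z R (ore_mult s)"
  obtain n :: nat and xs ys where gb1: "\<forall>i<n. s (xs i) = xs i \<and> s (ys i) = ys i"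
    and gb2: "\<forall>u\<in>H. (\<Sum>i<n. xs i * u (ys i)) = (if u = id then 1 else 0)"
    using galois_basis by blast
  let ?T = "tensor_rel UNIV (\<lambda>m r. sm r m) Z R (ore_mult s)"
  have fa: "\<And>a b. f (a + b) = f a + f b" using lin unfolding rlinear_def by blast
  have f0: "f 0 = 0" using add_hom_0[of f] fa by blast
  have D: "t - (\<Sum>j<n. frag_of (lext (\<lambda>p k. zm k ((\<lambda>m r. sm r m) (fst p) (tr (smult (ys j) (snd p))))) t, [:xs j:]))
      \<in> ?T"
  proof (rule decomp[where \<mu>="\<lambda>j z. tr (smult (ys j) z)"])
    show "\<And>j. j < n \<Longrightarrow> [:xs j:] \<in> Z" using gb1 X_Z by blast
    show "\<And>j z. j < n \<Longrightarrow> z \<in> Z \<Longrightarrow> tr (smult (ys j) z) \<in> R" using gb1 mu_R by blast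
    show "\<And>j z. j < n \<Longrightarrow> z \<in> Z \<Longrightarrow> ore_mult s (tr (smult (ys j) z)) [:xs j:] \<in> Z"
      using gb1 mulX Z_smult mu_Z by metis
    show "\<And>z. z \<in> Z \<Longrightarrow> z = (\<Sum>j<n. ore_mult s (tr (smult (ys j) z)) [:xs j:])"
      using gb1 mulX expand[OF gb2] by simp
  qed (auto simp: Z_0 Z_add keys)
  have Th0: "lext (\<lambda>p k. zm k (sm (tr (smult (ys j) (snd p))) (fst p))) t = 0" if j: "j < n" for j
  proof -
    have yj: "s (ys j) = ys j" using gb1 j by blast
    have "lext (\<lambda>p k. zm k (sn (tr (smult (ys j) (snd p))) (fst p))) (tmap f t) = 0"
      by (rule kill_mod[OF rmN yj tN])
    then have "f (lext (\<lambda>p k. zm k (sm (tr (smult (ys j) (snd p))) (fst p))) t) = f 0"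
      using tmap_lext[OF lin keys yj] f0 by simp
    then show ?thesis using inj by (simp add: inj_eq)
  qed
  have S: "(\<Sum>j<n. frag_of (lext (\<lambda>p k. zm k (sm (tr (smult (ys j) (snd p))) (fst p))) t, [:xs j:])) \<in> ?T"
    by (rule trel_sum) (auto simp: Th0 gb1 X_Z intro: trel_0l)
  from tensor_rel.plus[OF D S] show "t \<in> ?T" by simp
qed

end

lemma smult_sum_right: "smult c (sum f A) = (\<Sum>i\<in>A. smult c (f i))"
  by (induction A rule: infinite_finite_induct) (auto simp: smult_add_right)

context gal begin

lemma comp_inv_id: "g \<in> H \<Longrightarrow> h \<in> H \<Longrightarrow> (h \<circ> inv g = id) \<longleftrightarrow> h = g"
proof
  assume gH: "g \<in> H" and hH: "h \<in> H" and e: "h \<circ> inv g = id"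
  have "inj g" using fa_basic(7)[OF Haut[OF gH]] .
  then have "inv g \<circ> g = id" by (simp add: inj_iff)
  then have "h = (h \<circ> inv g) \<circ> g" by (simp add: o_assoc[symmetric])
  then show "h = g" using e by simp
next
  assume gH: "g \<in> H" and "h = g"
  have "surj g" using fa_basic(8)[OF Haut[OF gH]] .
  then show "h \<circ> inv g = id" using \<open>h = g\<close> by (simp add: surj_iff)
qed

lemma trace_one: "\<exists>u. s u = u \<and> tr (smult u 1) = 1"
proof -
  obtain n :: nat and xs ys where gb1: "\<forall>i<n. s (xs i) = xs i \<and> s (ys i) = ys i"
    and gb2: "\<forall>u\<in>H. (\<Sum>i<n. xs i * u (ys i)) = (if u = id then 1 else 0)"
    using galois_basis by blast
  have "(\<Sum>j<n. xs j * (\<Sum>h\<in>H. h (ys j))) = (\<Sum>h\<in>H. \<Sum>j<n. xs j * h (ys j))"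
    by (simp add: sum_distrib_left sum.swap[of _ "{..<n}"])
  also have "\<dots> = (\<Sum>h\<in>H. if h = id then 1 else 0)" using gb2 by (intro sum.cong) auto
  also have "\<dots> = 1" using Hid fH by simp
  finally have one: "(\<Sum>j<n. xs j * (\<Sum>h\<in>H. h (ys j))) = 1" .
  have "\<exists>j<n. (\<Sum>h\<in>H. h (ys j)) \<noteq> 0"
  proof (rule ccontr)
    assume "\<not> (\<exists>j<n. (\<Sum>h\<in>H. h (ys j)) \<noteq> 0)"
    then have "(\<Sum>j<n. xs j * (\<Sum>h\<in>H. h (ys j))) = 0" by simp
    then show False using one by simp
  qed
  then obtain j where j: "j < n" and k0: "(\<Sum>h\<in>H. h (ys j)) \<noteq> 0" by blast
  define y where "y = ys j"
  define k where "k = (\<Sum>h\<in>H. h y)"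
  have sy: "s y = y" using gb1 j y_def by blast
  have kk: "k \<noteq> 0" using k0 by (simp add: k_def y_def)
  have ctr: "coeff (tr [:y:]) 0 = k" by (simp add: coeff_tr k_def)
  have hk: "h k = k" if hH: "h \<in> H" for h
  proof -
    have "coeff (map_poly h (tr [:y:])) 0 = coeff (tr [:y:]) 0" using tr_inv[OF hH] by simp
    then show ?thesis using ctr coeff_act[OF hH] by simp
  qed
  have sk: "s k = k" unfolding k_def by (simp add: fa_sum[OF fs] sfix_H[OF _ sy])
  define u where "u = y * inverse k"
  have su: "s u = u" unfolding u_def using sfix_basic(1)[OF sy sfix_basic(4)[OF sk sk]] .
  have "tr (smult u 1) = 1"
  proof (rule poly_eqI)
    fix i
    show "coeff (tr (smult u 1)) i = coeff 1 i"
    proof (cases "i = 0")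
      case True
      have "coeff (tr (smult u 1)) i = (\<Sum>h\<in>H. h (y * inverse k))" using True by (simp add: coeff_tr u_def)
      also have "\<dots> = (\<Sum>h\<in>H. h y * inverse k)"
        by (intro sum.cong refl) (simp add: fa_basic(4,9)[OF Haut] hk)
      also have "\<dots> = k * inverse k" by (simp add: k_def sum_distrib_right)
      also have "\<dots> = 1" using kk by simp
      finally show ?thesis using True by simp
    next
      case False
      then show ?thesis by (simp add: coeff_tr h0 coeff_const_if)
    qed
  qed
  then show ?thesis using su by blast
qed

lemma faithful: "faithfully_flat_over R Z (ore_mult s) TYPE('m::ab_group_add) TYPE('n::ab_group_add)"
  unfolding faithfully_flat_over_def
proof (intro conjI flat allI impI, elim conjE)
  fix sm :: "'a poly \<Rightarrow> 'm \<Rightarrow> 'm" and m :: 'm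
  assume rm: "rmodule R (ore_mult s) sm"
    and all: "\<forall>m z. z \<in> Z \<longrightarrow> Poly_Mapping.single (m, z) 1 \<in> tensor_rel UNIV (\<lambda>m r. sm r m) Z R (ore_mult s)"
  obtain u where su: "s u = u" and tu: "tr (smult u 1) = 1" using trace_one by blast
  have "lext (\<lambda>p k. zm k (sm (tr (smult u (snd p))) (fst p))) (frag_of (m, 1)) = 0"
    by (rule kill_mod[OF rm su]) (use all Z_1 in blast)
  moreover have "sm 1 m = m" using rm unfolding rmodule_def by blast
  moreover have "tr [:u:] = 1" using tu by simp
  ultimately show "m = 0" by (simp add: lext_single[OF addF_zm])
qed

lemma gmap_lext: "galois_map (ore_mult s) ore_act t h = lext (\<lambda>p k. of_int k * ore_mult s (fst p) (map_poly h (snd p))) t"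
  by (simp add: galois_map_def lext_def ore_act_def)

lemma addF_of_int: "addF (\<lambda>p k. of_int k * (g p :: 'b::ring_1))"
  by (simp add: addF_def distrib_right)

lemma surj_part:
  assumes fZ: "\<forall>h\<in>H. f h \<in> Z"
  shows "\<exists>t. Poly_Mapping.keys t \<subseteq> Z \<times> Z \<and> (\<forall>h\<in>H. galois_map (ore_mult s) ore_act t h = f h)"
proof -
  obtain n :: nat and xs ys where gb1: "\<forall>i<n. s (xs i) = xs i \<and> s (ys i) = ys i"
    and gb2: "\<forall>u\<in>H. (\<Sum>i<n. xs i * u (ys i)) = (if u = id then 1 else 0)"
    using galois_basis by blast
  define t where "t = (\<Sum>g\<in>H. \<Sum>j<n. frag_of (smult (xs j) (f g), [:inv g (ys j):]))"
  have "Poly_Mapping.keys t \<subseteq> Z \<times> Z"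
  proof
    fix p assume "p \<in> Poly_Mapping.keys t"
    then have "p \<in> (\<Union>g\<in>H. Poly_Mapping.keys (\<Sum>j<n. frag_of (smult (xs j) (f g), [:inv g (ys j):])))"
      unfolding t_def using keys_sum[of "\<lambda>g. \<Sum>j<n. frag_of (smult (xs j) (f g), [:inv g (ys j):])" H] by blast
    then obtain g where g: "g \<in> H"
      and p1: "p \<in> Poly_Mapping.keys (\<Sum>j<n. frag_of (smult (xs j) (f g), [:inv g (ys j):]))" by blast
    then obtain j where j: "j < n"
      and p: "p \<in> Poly_Mapping.keys (frag_of (smult (xs j) (f g), [:inv g (ys j):]))"
      using keys_sum[of "\<lambda>j. frag_of (smult (xs j) (f g), [:inv g (ys j):])" "{..<n}"] by blast
    have "smult (xs j) (f g) \<in> Z" using Z_smult gb1 j fZ g by blast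
    moreover have "[:inv g (ys j):] \<in> Z" using Z_const sfix_H[OF Hinv[OF g]] gb1 j by blast
    ultimately show "p \<in> Z \<times> Z" using p by (simp add: keys_frag_of)
  qed
  moreover have "galois_map (ore_mult s) ore_act t h = f h" if hH: "h \<in> H" for h
  proof -
    have "galois_map (ore_mult s) ore_act t h
        = (\<Sum>g\<in>H. \<Sum>j<n. ore_mult s (smult (xs j) (f g)) (map_poly h [:inv g (ys j):]))"
      unfolding gmap_lext t_def by (simp add: lext_sum[OF addF_of_int] lext_single[OF addF_of_int])
    also have "\<dots> = (\<Sum>g\<in>H. \<Sum>j<n. smult (xs j * (h \<circ> inv g) (ys j)) (f g))"
    proof (intro sum.cong refl)
      fix g j assume g: "g \<in> H" and "j \<in> {..<n}"
      then have j: "j < n" by simp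
      have fx: "s (h (inv g (ys j))) = h (inv g (ys j))"
        using sfix_H[OF hH sfix_H[OF Hinv[OF g]]] gb1 j by blast
      show "ore_mult s (smult (xs j) (f g)) (map_poly h [:inv g (ys j):]) = smult (xs j * (h \<circ> inv g) (ys j)) (f g)"
        by (simp add: act_const[OF hH] mulX[OF fx] mult.commute)
    qed
    also have "\<dots> = (\<Sum>g\<in>H. smult (if h \<circ> inv g = id then 1 else 0) (f g))"
    proof (intro sum.cong refl)
      fix g assume g: "g \<in> H"
      have "(\<Sum>j<n. smult (xs j * (h \<circ> inv g) (ys j)) (f g)) = smult (\<Sum>j<n. xs j * (h \<circ> inv g) (ys j)) (f g)"
        by (simp add: smult_sum)
      also have "\<dots> = smult (if h \<circ> inv g = id then 1 else 0) (f g)"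
      proof -
        have e: "(\<Sum>j<n. xs j * (h \<circ> inv g) (ys j)) = (if h \<circ> inv g = id then 1 else 0)"
          using gb2 Hcl[OF hH Hinv[OF g]] by blast
        show ?thesis by (simp only: e)
      qed
      finally show "(\<Sum>j<n. smult (xs j * (h \<circ> inv g) (ys j)) (f g)) = smult (if h \<circ> inv g = id then 1 else 0) (f g)" .
    qed
    also have "\<dots> = (\<Sum>g\<in>H. if g = h then f g else 0)"
      by (intro sum.cong refl) (use comp_inv_id hH in auto)
    also have "\<dots> = f h" using hH fH by simp
    finally show ?thesis .
  qed
  ultimately show ?thesis by blast
qed

lemma inj_part:
  assumes keys: "Poly_Mapping.keys t \<subseteq> Z \<times> Z"
    and gm: "\<forall>h\<in>H. galois_map (ore_mult s) ore_act t h = 0"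
  shows "t \<in> tensor_rel Z (\<lambda>c r. ore_mult s c r) Z R (ore_mult s)"
proof -
  obtain n :: nat and xs ys where gb1: "\<forall>i<n. s (xs i) = xs i \<and> s (ys i) = ys i"
    and gb2: "\<forall>u\<in>H. (\<Sum>i<n. xs i * u (ys i)) = (if u = id then 1 else 0)"
    using galois_basis by blast
  let ?T = "tensor_rel Z (\<lambda>c r. ore_mult s c r) Z R (ore_mult s)"
  have D: "t - (\<Sum>j<n. frag_of (lext (\<lambda>p k. zm k ((\<lambda>c r. ore_mult s c r) (fst p) (tr (smult (ys j) (snd p))))) t, [:xs j:]))
      \<in> ?T"
  proof (rule decomp[where \<mu>="\<lambda>j z. tr (smult (ys j) z)"])
    show "\<And>j. j < n \<Longrightarrow> [:xs j:] \<in> Z" using gb1 X_Z by blast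
    show "\<And>j z. j < n \<Longrightarrow> z \<in> Z \<Longrightarrow> tr (smult (ys j) z) \<in> R" using gb1 mu_R by blast
    show "\<And>j z. j < n \<Longrightarrow> z \<in> Z \<Longrightarrow> ore_mult s (tr (smult (ys j) z)) [:xs j:] \<in> Z"
    proof -
      fix j z assume j: "j < n" and z: "z \<in> Z"
      have "ore_mult s (tr (smult (ys j) z)) [:xs j:] = smult (xs j) (tr (smult (ys j) z))"
        using gb1 j mulX by blast
      moreover have "smult (xs j) (tr (smult (ys j) z)) \<in> Z" using Z_smult mu_Z gb1 j z by blast
      ultimately show "ore_mult s (tr (smult (ys j) z)) [:xs j:] \<in> Z" by simp
    qed
    show "\<And>z. z \<in> Z \<Longrightarrow> z = (\<Sum>j<n. ore_mult s (tr (smult (ys j) z)) [:xs j:])"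
      using gb1 mulX expand[OF gb2] by simp
    show "\<And>m r. m \<in> Z \<Longrightarrow> r \<in> R \<Longrightarrow> ore_mult s m r \<in> Z" using Z_mul R_Z by blast
  qed (auto simp: Z_0 Z_add Z_minus keys)
  have Th0: "lext (\<lambda>p k. zm k (ore_mult s (fst p) (tr (smult (ys j) (snd p))))) t = 0" if j: "j < n" for j
  proof -
    have yj: "s (ys j) = ys j" using gb1 j by blast
    have hy: "h \<in> H \<Longrightarrow> s (h (ys j)) = h (ys j)" for h using sfix_H yj by blast
    have "lext (\<lambda>p k. zm k (ore_mult s (fst p) (tr (smult (ys j) (snd p))))) t
        = (\<Sum>p\<in>Poly_Mapping.keys t. of_int (Poly_Mapping.lookup t p) *
             (\<Sum>h\<in>H. smult (h (ys j)) (ore_mult s (fst p) (map_poly h (snd p)))))"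
      unfolding lext_def zm_ring
      by (intro sum.cong refl) (simp add: trH_def ore_sum_right[OF fs] act_smult ore_smult_right[OF fs] hy)
    also have "\<dots> = (\<Sum>h\<in>H. smult (h (ys j)) (\<Sum>p\<in>Poly_Mapping.keys t. of_int (Poly_Mapping.lookup t p) *
             ore_mult s (fst p) (map_poly h (snd p))))"
      by (simp add: sum_distrib_left smult_sum_right sum.swap[of _ H])
    also have "\<dots> = (\<Sum>h\<in>H. smult (h (ys j)) (galois_map (ore_mult s) ore_act t h))"
      by (simp add: galois_map_def ore_act_def)
    also have "\<dots> = 0" using gm by simp
    finally show ?thesis .
  qed
  have S: "(\<Sum>j<n. frag_of (lext (\<lambda>p k. zm k (ore_mult s (fst p) (tr (smult (ys j) (snd p))))) t, [:xs j:])) \<in> ?T"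
    by (rule trel_sum) (auto simp: Th0 gb1 X_Z Z_0 intro: trel_0l)
  from tensor_rel.plus[OF D S] show ?thesis by simp
qed

lemma hg: "hopf_galois R Z (ore_mult s) ore_act H"
  unfolding hopf_galois_def using surj_part inj_part by blast

lemma main_gal: "centrally_galois (coinv UNIV ore_act H) UNIV (ore_mult s) ore_act H
    TYPE('m::ab_group_add) TYPE('n::ab_group_add)"
  unfolding centrally_galois_def
proof (intro conjI refl hg faithful)
  show "subcomodule Z ore_act H" unfolding subcomodule_def ore_act_def using Z_act by blast
qed

end

lemma reindex_comp:
  assumes "inj g"
  shows "(\<Sum>\<chi>\<in>(\<lambda>n. g \<circ> n) ` N. \<chi> z) = (\<Sum>n\<in>N. g (n z))"
proof -
  have "inj_on (\<lambda>n. g \<circ> n) N"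
  proof (rule inj_onI)
    fix n1 n2 assume "g \<circ> n1 = g \<circ> n2"
    then have "\<And>x. g (n1 x) = g (n2 x)" by (metis comp_apply)
    then show "n1 = n2" using assms by (auto simp: fun_eq_iff inj_eq)
  qed
  then show ?thesis by (simp add: sum.reindex)
qed

theorem corollary3p18:
  fixes K Kc :: "'a::field set"
    and G H N :: "('a \<Rightarrow> 'a) set"
    and \<sigma> :: "'a \<Rightarrow> 'a"
    and B :: "'a set"
  assumes "subfield K" and "subfield Kc" and "K \<subseteq> Kc"
    and "finite_ext Kc" and "separable_ext Kc" and "normal_ext Kc"
    and "G = galois_group Kc"
    and "subgrp H G" and "subgrp N G"
    and "G = {n \<circ> h | n h. n \<in> N \<and> h \<in> H}"
    and "N \<inter> H = {id}"
    and "N = cyclic_gen \<sigma>"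
    and "\<forall>g\<in>G. \<sigma> \<circ> g = g \<circ> \<sigma>"
    and "B = fixed_field H"
  shows "centrally_galois (ore_sub B) UNIV (ore_mult \<sigma>) ore_act H
           TYPE('m::ab_group_add) TYPE('n::ab_group_add)"
proof -
  note G = assms(7) and sH = assms(8) and sN = assms(9) and NH = assms(11) and Nc = assms(12)
    and comm = assms(13) and Bd = assms(14)
  have finG: "finite G" using galois_group_finite[OF assms(4)] G by simp
  have Gaut: "g \<in> G \<Longrightarrow> field_aut g" for g using G by (simp add: galois_group_def)
  have HG: "H \<subseteq> G" and NG: "N \<subseteq> G" using sH sN by (auto simp: subgrp_def)
  have Hid: "id \<in> H" and Hcl: "\<And>g h. g \<in> H \<Longrightarrow> h \<in> H \<Longrightarrow> g \<circ> h \<in> H"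
    and Hinv: "\<And>h. h \<in> H \<Longrightarrow> inv h \<in> H" using sH by (auto simp: subgrp_def)
  have Nid: "id \<in> N" and Ncl: "\<And>g h. g \<in> N \<Longrightarrow> h \<in> N \<Longrightarrow> g \<circ> h \<in> N"
    and Ninv: "\<And>h. h \<in> N \<Longrightarrow> inv h \<in> N" using sN by (auto simp: subgrp_def)
  have sN': "\<sigma> \<in> N" unfolding Nc cyclic_gen_def by (rule UnI1, rule range_eqI[of _ _ 1]) simp
  have fs: "field_aut \<sigma>" using Gaut NG sN' by blast
  have finN: "finite N" and finH: "finite H" using finG HG NG finite_subset by blast+
  have sep: "\<exists>y. \<sigma> y = y \<and> g y \<noteq> h y" if g: "g \<in> H" and h: "h \<in> H" and gh: "g \<noteq> h" for g h
  proof (rule ccontr)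
    assume "\<not> (\<exists>y. \<sigma> y = y \<and> g y \<noteq> h y)"
    then have eqfix: "\<And>y. \<sigma> y = y \<Longrightarrow> g y = h y" by blast
    have fg: "field_aut g" and fh: "field_aut h" using g h HG Gaut by auto
    define A where "A = (\<lambda>n. g \<circ> n) ` N"
    define Bs where "Bs = (\<lambda>n. h \<circ> n) ` N"
    have NN: "(\<lambda>n. \<sigma> \<circ> n) ` N = N"
    proof
      show "(\<lambda>n. \<sigma> \<circ> n) ` N \<subseteq> N" using Ncl sN' by auto
      show "N \<subseteq> (\<lambda>n. \<sigma> \<circ> n) ` N"
      proof
        fix n assume n: "n \<in> N"
        have "surj \<sigma>" using fa_basic(8)[OF fs] .
        then have "\<sigma> \<circ> (inv \<sigma> \<circ> n) = n" by (simp add: surj_iff o_assoc)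
        moreover have "inv \<sigma> \<circ> n \<in> N" using Ncl[OF Ninv[OF sN'] n] .
        ultimately show "n \<in> (\<lambda>n. \<sigma> \<circ> n) ` N" by (metis image_eqI)
      qed
    qed
    have wfix: "\<sigma> (\<Sum>n\<in>N. n z) = (\<Sum>n\<in>N. n z)" for z
    proof -
      have "\<sigma> (\<Sum>n\<in>N. n z) = (\<Sum>n\<in>N. \<sigma> (n z))" by (rule fa_sum[OF fs])
      also have "\<dots> = (\<Sum>\<chi>\<in>(\<lambda>n. \<sigma> \<circ> n) ` N. \<chi> z)"
        by (rule reindex_comp[symmetric]) (rule fa_basic(7)[OF fs])
      also have "\<dots> = (\<Sum>n\<in>N. n z)" using NN by simp
      finally show ?thesis .
    qed
    have disj: "A \<inter> Bs = {}"
    proof (rule ccontr)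
      assume "A \<inter> Bs \<noteq> {}"
      then obtain n1 n2 where n1: "n1 \<in> N" and n2: "n2 \<in> N" and e: "g \<circ> n1 = h \<circ> n2"
        unfolding A_def Bs_def by blast
      have injh: "inj h" using fa_basic(7)[OF fh] .
      have surjn1: "surj n1" using fa_basic(8)[OF Gaut] NG n1 by blast
      have "inv h \<circ> g \<circ> n1 = n2" using e injh by (simp add: o_assoc[symmetric] inv_o_cancel)
        (metis comp_assoc id_comp inv_o_cancel)
      then have "inv h \<circ> g = n2 \<circ> inv n1"
        using surjn1 by (metis comp_assoc comp_id surj_iff)
      moreover have "inv h \<circ> g \<in> H" using Hcl[OF Hinv[OF h] g] .
      moreover have "n2 \<circ> inv n1 \<in> N" using Ncl[OF n2 Ninv[OF n1]] .
      ultimately have "inv h \<circ> g = id" using NH by auto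
      then have "h \<circ> (inv h \<circ> g) = h" by simp
      moreover have "surj h" using fa_basic(8)[OF fh] .
      ultimately have "g = h" by (metis comp_assoc id_comp surj_iff)
      then show False using gh by simp
    qed
    define c where "c \<chi> = (if \<chi> \<in> A then (1::'a) else -1)" for \<chi>
    have finS: "finite (A \<union> Bs)" using finN by (simp add: A_def Bs_def)
    have mulS: "\<forall>\<chi>\<in>A \<union> Bs. \<forall>x y. \<chi> (x*y) = \<chi> x * \<chi> y" "\<forall>\<chi>\<in>A \<union> Bs. \<chi> 1 = 1"
    proof -
      have "\<chi> \<in> A \<union> Bs \<Longrightarrow> field_aut \<chi>" for \<chi>
        unfolding A_def Bs_def using fa_comp fg fh Gaut NG by blast
      then show "\<forall>\<chi>\<in>A \<union> Bs. \<forall>x y. \<chi> (x*y) = \<chi> x * \<chi> y" "\<forall>\<chi>\<in>A \<union> Bs. \<chi> 1 = 1"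
        using fa_basic(2,4) by blast+
    qed
    have rel: "\<forall>z. (\<Sum>\<chi>\<in>A \<union> Bs. c \<chi> * \<chi> z) = 0"
    proof
      fix z
      have fA: "finite A" "finite Bs" using finS by auto
      have "(\<Sum>\<chi>\<in>A \<union> Bs. c \<chi> * \<chi> z) = (\<Sum>\<chi>\<in>A. c \<chi> * \<chi> z) + (\<Sum>\<chi>\<in>Bs. c \<chi> * \<chi> z)"
        by (rule sum.union_disjoint[OF fA disj])
      also have "\<dots> = (\<Sum>\<chi>\<in>A. \<chi> z) - (\<Sum>\<chi>\<in>Bs. \<chi> z)"
      proof -
        have e1: "(\<Sum>\<chi>\<in>A. c \<chi> * \<chi> z) = (\<Sum>\<chi>\<in>A. \<chi> z)" by (simp add: c_def)
        have e2: "(\<Sum>\<chi>\<in>Bs. c \<chi> * \<chi> z) = (\<Sum>\<chi>\<in>Bs. - \<chi> z)"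
          by (rule sum.cong) (use disj in \<open>auto simp: c_def\<close>)
        show ?thesis unfolding e1 e2 by (simp add: sum_negf)
      qed
      also have "\<dots> = (\<Sum>n\<in>N. g (n z)) - (\<Sum>n\<in>N. h (n z))"
        unfolding A_def Bs_def
        by (simp add: reindex_comp[OF fa_basic(7)[OF fg]] reindex_comp[OF fa_basic(7)[OF fh]])
      also have "\<dots> = g (\<Sum>n\<in>N. n z) - h (\<Sum>n\<in>N. n z)"
        by (simp add: fa_sum[OF fg] fa_sum[OF fh])
      also have "\<dots> = 0" using eqfix[OF wfix] by simp
      finally show "(\<Sum>\<chi>\<in>A \<union> Bs. c \<chi> * \<chi> z) = 0" .
    qed
    have "g \<in> A" unfolding A_def using Nid by (metis comp_id image_eqI)
    then have "c g = 1" by (simp add: c_def)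
    moreover have "c g = 0" using dedekind[OF finS mulS rel] \<open>g \<in> A\<close> by blast
    ultimately show False by simp
  qed
  interpret gal \<sigma> H
  proof
    show "field_aut \<sigma>" by (rule fs)
    show "finite H" by (rule finH)
    show "\<And>h. h \<in> H \<Longrightarrow> field_aut h" using HG Gaut by blast
    show "\<And>h. h \<in> H \<Longrightarrow> h \<circ> \<sigma> = \<sigma> \<circ> h" using HG comm by (metis subsetD)
    show "id \<in> H" by (rule Hid)
    show "\<And>g h. g \<in> H \<Longrightarrow> h \<in> H \<Longrightarrow> g \<circ> h \<in> H" by (rule Hcl)
    show "\<And>h. h \<in> H \<Longrightarrow> inv h \<in> H" by (rule Hinv)
    show "\<And>g h. g \<in> H \<Longrightarrow> h \<in> H \<Longrightarrow> g \<noteq> h \<Longrightarrow> \<exists>y. \<sigma> y = y \<and> g y \<noteq> h y" by (rule sep)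
  qed
  have "ore_sub B = coinv UNIV ore_act H"
  proof -
    have "p \<in> ore_sub B \<longleftrightarrow> p \<in> coinv UNIV ore_act H" for p
      by (auto simp: ore_sub_def Bd fixed_field_def coinv_def ore_act_def poly_eq_iff coeff_act)
    then show ?thesis by blast
  qed
  then show ?thesis using main_gal by simp
qed

end
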